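(* Let $\alpha>1$, $s>0$, $L\ge 1$ and $D\ge 1$. Let $\mathcal{D}=(\mathbf{X},\mathbf{Y},\mathbf{A})$ and $\mathcal{D}'=(\mathbf{X}',\mathbf{Y}',\mathbf{A}')$ be graph datasets that are either node-level adjacent or $k$-neighbor-level adjacent (for some $k\ge 0$), with replaced node index $r$. Assume that every node has out-degree at most $D$ in both $\mathbf{A}$ and $\mathbf{A}'$, and that the random weights satisfy $D_\alpha(\mathbf{W}^{(X)}\,\|\,\mathbf{W}^{(X)\prime})\le\gamma_1$, where $\mathbf{W}^{(X)}$ and $\mathbf{W}^{(X)\prime}$ are the weights produced on $\mathcal{D}$ and $\mathcal{D}'$ respectively. Let $\mathbf{Z}$ and $\mathbf{Z}'$ be the GAP embeddings computed from $\mathcal{D}$ and $\mathcal{D}'$. Then $$D_\alpha(\mathbf{Z}_{\setminus r}\,\|\,\mathbf{Z}'_{\setminus r})\le \gamma_1+\frac{4DL\alpha}{2s^2}.$$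
   Context: A graph dataset is $\mathcal{D}=(\mathbf{X},\mathbf{Y},\mathbf{A})$ with node set $[n]$, feature matrix $\mathbf{X}\in\mathbb{R}^{n\times F}$, label matrix $\mathbf{Y}\in\{0,1\}^{m\times C}$ (one-hot rows; nodes $1,\dots,m$ are labeled), and adjacency matrix $\mathbf{A}\in\{0,1\}^{n\times n}$ of a directed graph without self-loops ($\mathbf{A}_{ii}=0$). The out-neighborhood of $r$ is $N(r)=\{i:\mathbf{A}_{ir}=1\}$ and the out-degree of $r$ is the column sum $\sum_i\mathbf{A}_{ir}$. For a matrix $\mathbf{S}$, $\mathbf{S}_i$ is its $i$-th row and $\mathbf{S}_{\setminus r}$ is the submatrix obtained by deleting the $r$-th row. Node-level adjacency: there is an index $r\in[n]$ such that $\mathcal{D}'$ is obtained from $\mathcal{D}$ by replacing $\mathbf{X}_r$ by an arbitrary vector, $\mathbf{Y}_r$ (if $r\le m$) by an arbitrary one-hot vector, and arbitrarily changing entries of the $r$-th row and $r$-th column of $\mathbf{A}$ (keeping no self-loops); all other entries are unchanged. $k$-neighbor-level adjacency: the same, except that at most $k$ entries of the $r$-th row and at most $k$ entries of the $r$-th column of $\mathbf{A}$ are changed (excluding $\mathbf{A}_{rr}$). Row-normalization divides each row by its Euclidean norm. For $\alpha>1$ the Rényi divergence of random variables $X\sim P$, $Y\sim Q$ is $D_\alpha(X\|Y)=\frac{1}{\alpha-1}\log\mathbb{E}_{x\sim Q}[(P(x)/Q(x))^\alpha]$. GAP embedding: $\mathbf{W}^{(X)}$ is a random weight (output of a randomized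 training algorithm on the dataset) and $f(\cdot;\mathbf{W})$ is a map whose $i$-th output row depends only on $\mathbf{X}_i$ and $\mathbf{W}$; set $\mathbf{H}^{(0)}=\text{row-normalization}(f(\mathbf{X};\mathbf{W}^{(X)}))$ and, for $l=0,\dots,L-1$, $\mathbf{H}^{(l+1)}=\text{row-normalization}(\mathbf{A}\mathbf{H}^{(l)}+\mathbf{N}^{(l)})$, where the $\mathbf{N}^{(l)}$ have i.i.d. $\mathcal{N}(0,s^2)$ entries and are mutually independent and independent of $\mathbf{W}^{(X)}$; finally $\mathbf{Z}$ is the column-wise concatenation $\mathbf{H}^{(0)}\Vert\cdots\Vert\mathbf{H}^{(L)}$. $\mathbf{Z}'$ is defined in the same way from $\mathcal{D}'$. *)

theory Defs
  imports "HOL-Probability.Probability"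
begin

definition renyi_divergence :: "real \<Rightarrow> 'a measure \<Rightarrow> 'a measure \<Rightarrow> ereal" where
  "renyi_divergence \<alpha> P Q =
    (if sets P = sets Q \<and> absolutely_continuous Q P then
       (let I = (\<integral>\<^sup>+ x. ennreal ((enn2real (RN_deriv Q P x)) powr \<alpha>) \<partial>Q)
        in if I = \<infinity> then \<infinity> else ereal (ln (enn2real I) / (\<alpha> - 1)))
     else \<infinity>)"

definition row_normalize :: "real ^ 'd \<Rightarrow> real ^ 'd" where
  "row_normalize x = x /\<^sub>R norm x"

(* Graph dataset with nodes 0..<n, labeled nodes 0..<m, classes 0..<C
   (a one-hot label row is represented by its class index),
   features X i, labels Y i, adjacency A i j (= entry A_ij). *)
definition valid_dataset ::
  "nat \<Rightarrow> nat \<Rightarrow> nat \<Rightarrow> (nat \<Rightarrow> nat) \<Rightarrow> (nat \<Rightarrow> nat \<Rightarrow> bool) \<Rightarrow> bool" where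
  "valid_dataset n m C Y A \<longleftrightarrow>
     m \<le> n \<and> (\<forall>i<m. Y i < C) \<and> (\<forall>i j. A i j \<longrightarrow> i < n \<and> j < n) \<and> (\<forall>i. \<not> A i i)"

definition node_adjacent ::
  "nat \<Rightarrow> nat \<Rightarrow> nat \<Rightarrow> nat \<Rightarrow>
   (nat \<Rightarrow> 'x) \<Rightarrow> (nat \<Rightarrow> nat) \<Rightarrow> (nat \<Rightarrow> nat \<Rightarrow> bool) \<Rightarrow>
   (nat \<Rightarrow> 'x) \<Rightarrow> (nat \<Rightarrow> nat) \<Rightarrow> (nat \<Rightarrow> nat \<Rightarrow> bool) \<Rightarrow> bool" where
  "node_adjacent n m C r X Y A X' Y' A' \<longleftrightarrow>
     r < n \<and> valid_dataset n m C Y A \<and> valid_dataset n m C Y' A' \<and>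
     (\<forall>i<n. i \<noteq> r \<longrightarrow> X' i = X i) \<and>
     (\<forall>i<m. i \<noteq> r \<longrightarrow> Y' i = Y i) \<and>
     (\<forall>i<n. \<forall>j<n. i \<noteq> r \<and> j \<noteq> r \<longrightarrow> A' i j = A i j)"

definition k_neighbor_adjacent ::
  "nat \<Rightarrow> nat \<Rightarrow> nat \<Rightarrow> nat \<Rightarrow> nat \<Rightarrow>
   (nat \<Rightarrow> 'x) \<Rightarrow> (nat \<Rightarrow> nat) \<Rightarrow> (nat \<Rightarrow> nat \<Rightarrow> bool) \<Rightarrow>
   (nat \<Rightarrow> 'x) \<Rightarrow> (nat \<Rightarrow> nat) \<Rightarrow> (nat \<Rightarrow> nat \<Rightarrow> bool) \<Rightarrow> bool" where
  "k_neighbor_adjacent k n m C r X Y A X' Y' A' \<longleftrightarrow>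
     node_adjacent n m C r X Y A X' Y' A' \<and>
     card {j. j < n \<and> j \<noteq> r \<and> A r j \<noteq> A' r j} \<le> k \<and>
     card {i. i < n \<and> i \<noteq> r \<and> A i r \<noteq> A' i r} \<le> k"

(* out-degree of node j = column sum = card {i. A i j} *)
definition max_out_degree_le :: "nat \<Rightarrow> (nat \<Rightarrow> nat \<Rightarrow> bool) \<Rightarrow> nat \<Rightarrow> bool" where
  "max_out_degree_le n A D \<longleftrightarrow> (\<forall>j<n. card {i. i < n \<and> A i j} \<le> D)"

(* GAP layers: gap_H f n X A w N l i is row i of H^(l), where
   f w x is the i-th output row of f(X;W) for a row x = X_i,
   and N l i c is entry (i,c) of the noise matrix N^(l). *)
primrec gap_H ::
  "('w \<Rightarrow> 'x \<Rightarrow> real ^ 'd) \<Rightarrow> nat \<Rightarrow> (nat \<Rightarrow> 'x) \<Rightarrow> (nat \<Rightarrow> nat \<Rightarrow> bool) \<Rightarrow>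
   'w \<Rightarrow> (nat \<Rightarrow> nat \<Rightarrow> 'd \<Rightarrow> real) \<Rightarrow> nat \<Rightarrow> nat \<Rightarrow> real ^ 'd" where
  "gap_H f n X A w N 0 i = row_normalize (f w (X i))"
| "gap_H f n X A w N (Suc l) i =
     row_normalize ((\<Sum>j<n. if A i j then gap_H f n X A w N l j else 0) + (\<chi> c. N l i c))"

definition gap_noise :: "nat \<Rightarrow> nat \<Rightarrow> real \<Rightarrow> (nat \<Rightarrow> nat \<Rightarrow> 'd::finite \<Rightarrow> real) measure" where
  "gap_noise n L s =
     PiM {..<L} (\<lambda>l. PiM {..<n} (\<lambda>i. PiM UNIV (\<lambda>c::'d. density lborel (normal_density 0 s))))"

(* Law of Z_{\ r}: rows i in [n]-{r}, each row the concatenation of H^(0)_i,...,H^(L)_i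
   (represented as a map l \<in> {0..L} to the block H^(l)_i). *)
definition gap_Z_minus_dist ::
  "('w \<Rightarrow> 'x \<Rightarrow> real ^ 'd::finite) \<Rightarrow> nat \<Rightarrow> nat \<Rightarrow> real \<Rightarrow> nat \<Rightarrow>
   (nat \<Rightarrow> 'x) \<Rightarrow> (nat \<Rightarrow> nat \<Rightarrow> bool) \<Rightarrow> 'w measure \<Rightarrow>
   (nat \<Rightarrow> nat \<Rightarrow> real ^ 'd) measure" where
  "gap_Z_minus_dist f n L s r X A PW =
     distr (PW \<Otimes>\<^sub>M gap_noise n L s)
       (PiM ({..<n} - {r}) (\<lambda>i. PiM {..L} (\<lambda>l. borel)))
       (\<lambda>(w, N). \<lambda>i\<in>{..<n} - {r}. \<lambda>l\<in>{..L}. gap_H f n X A w N l i)"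

end

theory Submission
  imports Defs
begin

lemma renyi_dpi:
  fixes \<alpha> B :: real and g' :: "'a \<Rightarrow> 'b"
  assumes \<alpha>: "\<alpha> > 1"
  and M': "prob_space M'"
  and g': "g' \<in> M' \<rightarrow>\<^sub>M N"
  and \<rho>: "\<rho> \<in> borel_measurable M'" "\<And>x. \<rho> x \<ge> 0"
  and P: "prob_space (distr (density M' (\<lambda>x. ennreal (\<rho> x))) N g')"
  and bound: "(\<integral>\<^sup>+x. ennreal (\<rho> x powr \<alpha>) \<partial>M') \<le> ennreal B"
  shows "renyi_divergence \<alpha> (distr (density M' (\<lambda>x. ennreal (\<rho> x))) N g') (distr M' N g')
     \<le> ereal (ln B / (\<alpha> - 1))"
proof -
  define P where "P = distr (density M' (\<lambda>x. ennreal (\<rho> x))) N g'"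
  define Q where "Q = distr M' N g'"
  interpret Q: prob_space Q unfolding Q_def using M' g' by (simp add: prob_space.prob_space_distr)
  interpret P: prob_space P using P unfolding P_def .
  have [measurable]: "g' \<in> M' \<rightarrow>\<^sub>M N" using g' .
  have [measurable]: "\<rho> \<in> borel_measurable M'" using \<rho>(1) .
  have setsPQ: "sets P = sets Q" unfolding P_def Q_def by simp
  have ac: "absolutely_continuous Q P"
    unfolding absolutely_continuous_def
  proof
    fix A assume A: "A \<in> null_sets Q"
    then have "A \<in> sets N" "g' -` A \<inter> space M' \<in> null_sets M'"
      unfolding Q_def by (auto simp: null_sets_distr_iff)
    then show "A \<in> null_sets P"
      unfolding P_def by (auto simp: null_sets_distr_iff null_sets_density_iff intro!: AE_I')
  qed
  define h where "h = RN_deriv Q P"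
  have hP: "density Q h = P" unfolding h_def using Q.density_RN_deriv[OF ac setsPQ] .
  have [measurable]: "h \<in> borel_measurable Q" unfolding h_def by simp
  define t where "t x = enn2real (h x)" for x
  define k where "k m x = min (t x) (real m)" for m :: nat and x
  have t_nn: "t x \<ge> 0" for x unfolding t_def by simp
  have k_nn: "k m x \<ge> 0" for m x unfolding k_def using t_nn by simp
  have [measurable]: "t \<in> borel_measurable Q" unfolding t_def by simp
  have [measurable]: "k m \<in> borel_measurable Q" for m unfolding k_def by simp
  define J where "J m = (\<integral>\<^sup>+y. ennreal (k m y powr \<alpha>) \<partial>Q)" for m
  have hN[measurable]: "h \<in> borel_measurable N"
    using \<open>h \<in> borel_measurable Q\<close> unfolding Q_def by (simp cong: measurable_cong_sets)
  have tN[measurable]: "t \<in> borel_measurable N" unfolding t_def by simp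
  have kN[measurable]: "k m \<in> borel_measurable N" for m unfolding k_def by simp
  have Jm: "J m \<le> ennreal B" for m
  proof -
    have Jfin: "J m \<le> ennreal (real m powr \<alpha>)"
    proof -
      have "J m \<le> (\<integral>\<^sup>+y. ennreal (real m powr \<alpha>) \<partial>Q)"
        unfolding J_def using \<alpha>
        by (intro nn_integral_mono ennreal_leI powr_mono2) (auto simp: k_def k_nn t_nn)
      also have "\<dots> = ennreal (real m powr \<alpha>)" by (simp add: Q.emeasure_space_1)
      finally show ?thesis .
    qed
    have "J m \<le> (\<integral>\<^sup>+y. h y * ennreal (k m y powr (\<alpha> - 1)) \<partial>Q)"
      unfolding J_def
    proof (intro nn_integral_mono)
      fix y
      show "ennreal (k m y powr \<alpha>) \<le> h y * ennreal (k m y powr (\<alpha> - 1))"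
      proof (cases "h y = \<top>")
        case True
        then have "k m y = 0" unfolding k_def t_def by simp
        then show ?thesis using \<alpha> by simp
      next
        case False
        then have hy: "h y = ennreal (t y)" unfolding t_def by (simp add: ennreal_enn2real_if)
        have "k m y powr \<alpha> = k m y powr (\<alpha> - 1) * k m y powr 1"
          by (metis powr_add diff_add_cancel)
        also have "\<dots> \<le> k m y powr (\<alpha> - 1) * t y"
          using k_nn[of m y] by (intro mult_left_mono) (auto simp: k_def)
        finally show ?thesis unfolding hy
          by (simp add: ennreal_mult'[symmetric] t_nn ennreal_leI mult.commute)
      qed
    qed
    also have "\<dots> = (\<integral>\<^sup>+y. ennreal (k m y powr (\<alpha> - 1)) \<partial>P)"
      by (subst hP[symmetric]) (simp add: nn_integral_density)
    also have "\<dots> = (\<integral>\<^sup>+x. ennreal (k m (g' x) powr (\<alpha> - 1)) \<partial>density M' (\<lambda>x. ennreal (\<rho> x)))"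
      unfolding P_def by (simp add: nn_integral_distr)
    also have "\<dots> = (\<integral>\<^sup>+x. ennreal (\<rho> x) * ennreal (k m (g' x) powr (\<alpha> - 1)) \<partial>M')"
      by (simp add: nn_integral_density)
    also have "\<dots> \<le> (\<integral>\<^sup>+x. ennreal ((\<alpha> - 1) / \<alpha>) * ennreal (k m (g' x) powr \<alpha>)
                  + ennreal (1 / \<alpha>) * ennreal (\<rho> x powr \<alpha>) \<partial>M')"
    proof (intro nn_integral_mono)
      fix x
      have "k m (g' x) powr (\<alpha> - 1) * \<rho> x
          \<le> (k m (g' x) powr (\<alpha> - 1)) powr (\<alpha> / (\<alpha> - 1)) / (\<alpha> / (\<alpha> - 1)) + \<rho> x powr \<alpha> / \<alpha>"
        using \<alpha> \<rho>(2)[of x] by (intro Youngs_inequality) (auto simp: field_simps)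
      also have "(k m (g' x) powr (\<alpha> - 1)) powr (\<alpha> / (\<alpha> - 1)) = k m (g' x) powr \<alpha>"
        using \<alpha> k_nn[of m "g' x"] by (simp add: powr_powr)
      finally have *: "k m (g' x) powr (\<alpha> - 1) * \<rho> x
          \<le> (\<alpha> - 1) / \<alpha> * k m (g' x) powr \<alpha> + 1 / \<alpha> * \<rho> x powr \<alpha>" by (simp add: mult.commute)
      show "ennreal (\<rho> x) * ennreal (k m (g' x) powr (\<alpha> - 1))
          \<le> ennreal ((\<alpha> - 1) / \<alpha>) * ennreal (k m (g' x) powr \<alpha>) + ennreal (1 / \<alpha>) * ennreal (\<rho> x powr \<alpha>)"
        using * \<alpha> \<rho>(2)[of x]
        by (simp add: ennreal_mult'[symmetric] ennreal_plus[symmetric] mult.commute del: ennreal_plus)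
    qed
    also have "\<dots> = ennreal ((\<alpha> - 1) / \<alpha>) * (\<integral>\<^sup>+x. ennreal (k m (g' x) powr \<alpha>) \<partial>M')
                  + ennreal (1 / \<alpha>) * (\<integral>\<^sup>+x. ennreal (\<rho> x powr \<alpha>) \<partial>M')"
      by (simp add: nn_integral_add nn_integral_cmult)
    also have "(\<integral>\<^sup>+x. ennreal (k m (g' x) powr \<alpha>) \<partial>M') = J m"
      unfolding J_def Q_def by (simp add: nn_integral_distr)
    finally have JJ: "J m \<le> ennreal ((\<alpha> - 1) / \<alpha>) * J m + ennreal (1 / \<alpha>) * (\<integral>\<^sup>+x. ennreal (\<rho> x powr \<alpha>) \<partial>M')" .
    also have "\<dots> \<le> ennreal ((\<alpha> - 1) / \<alpha>) * J m + ennreal (1 / \<alpha>) * ennreal B"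
      by (intro add_mono mult_left_mono bound) auto
    finally have JJ2: "J m \<le> ennreal ((\<alpha> - 1) / \<alpha>) * J m + ennreal (1 / \<alpha>) * ennreal B" .
    obtain j where j: "J m = ennreal j" "j \<ge> 0"
      using Jfin by (cases "J m") (auto simp: top_unique)
    define B' where "B' = max B 0"
    have B'1: "ennreal B = ennreal B'" unfolding B'_def by (cases "B \<ge> 0") (auto simp: ennreal_neg max_def)
    have B'0: "B' \<ge> 0" unfolding B'_def by simp
    have "ennreal j \<le> ennreal ((\<alpha> - 1) / \<alpha> * j + 1 / \<alpha> * B')"
      using JJ2 j \<alpha> B'0 unfolding B'1 by (simp add: ennreal_mult'[symmetric] ennreal_plus[symmetric] del: ennreal_plus)
    then have "j \<le> (\<alpha> - 1) / \<alpha> * j + 1 / \<alpha> * B'"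
      using \<alpha> B'0 j by (subst (asm) ennreal_le_iff) (auto intro!: add_nonneg_nonneg)
    then have "\<alpha> * j \<le> (\<alpha> - 1) * j + B'" using \<alpha> by (simp add: field_simps)
    then have "j \<le> B'" by (simp add: algebra_simps)
    then show ?thesis using j B'1 by simp
  qed
  have "(\<integral>\<^sup>+y. ennreal (t y powr \<alpha>) \<partial>Q) = (\<integral>\<^sup>+y. (SUP m. ennreal (k m y powr \<alpha>)) \<partial>Q)"
  proof (rule nn_integral_cong)
    fix y
    show "ennreal (t y powr \<alpha>) = (SUP m. ennreal (k m y powr \<alpha>))"
    proof (rule antisym)
      obtain m :: nat where "t y \<le> real m" using real_arch_simple by blast
      then have "k m y = t y" unfolding k_def by simp
      then show "ennreal (t y powr \<alpha>) \<le> (SUP m. ennreal (k m y powr \<alpha>))"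
        by (metis SUP_upper UNIV_I)
      show "(SUP m. ennreal (k m y powr \<alpha>)) \<le> ennreal (t y powr \<alpha>)"
        using \<alpha> by (intro SUP_least ennreal_leI powr_mono2) (auto simp: k_def t_nn k_nn)
    qed
  qed
  also have "\<dots> = (SUP m. J m)" unfolding J_def
  proof (rule nn_integral_monotone_convergence_SUP)
    show "incseq (\<lambda>m y. ennreal (k m y powr \<alpha>))"
      using \<alpha> by (auto simp: incseq_def le_fun_def k_def t_nn intro!: ennreal_leI powr_mono2)
  qed simp
  also have "\<dots> \<le> ennreal B" by (intro SUP_least Jm)
  finally have IB: "(\<integral>\<^sup>+y. ennreal (t y powr \<alpha>) \<partial>Q) \<le> ennreal B" .
  have Ipos: "(\<integral>\<^sup>+y. ennreal (t y powr \<alpha>) \<partial>Q) \<noteq> 0"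
  proof
    assume "(\<integral>\<^sup>+y. ennreal (t y powr \<alpha>) \<partial>Q) = 0"
    then have "AE y in Q. ennreal (t y powr \<alpha>) = 0" by (simp add: nn_integral_0_iff_AE)
    moreover have "AE y in Q. h y \<noteq> \<infinity>"
      unfolding h_def by (rule Q.RN_deriv_finite[OF _ ac setsPQ]) (simp add: P.sigma_finite_measure)
    ultimately have "AE y in Q. h y = 0"
      by eventually_elim (auto simp: t_def enn2real_eq_0_iff)
    then have "(\<integral>\<^sup>+y. h y \<partial>Q) = 0" by (simp add: nn_integral_0_iff_AE)
    moreover have "(\<integral>\<^sup>+y. h y \<partial>Q) = emeasure P (space P)"
    proof -
      have "emeasure P (space P) = emeasure (density Q h) (space Q)"
        using sets_eq_imp_space_eq[OF setsPQ] hP by simp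
      also have "\<dots> = (\<integral>\<^sup>+y. h y \<partial>Q)"
        by (subst emeasure_density) (auto intro!: nn_integral_cong)
      finally show ?thesis by simp
    qed
    ultimately show False using P.emeasure_space_1 by simp
  qed
  define I where "I = (\<integral>\<^sup>+y. ennreal (t y powr \<alpha>) \<partial>Q)"
  have I_top: "I \<noteq> \<infinity>" using IB unfolding I_def by (auto simp: top_unique)
  have I_pos: "enn2real I > 0" using Ipos I_top unfolding I_def by (simp add: enn2real_positive_iff zero_less_iff_neq_zero top.not_eq_extremum)
  have I_B: "enn2real I \<le> B"
  proof -
    have "B \<ge> 0"
    proof (rule ccontr)
      assume "\<not> B \<ge> 0" then have "ennreal B = 0" by (simp add: ennreal_neg)
      then show False using IB Ipos by simp
    qed
    then show ?thesis using IB unfolding I_def by (simp add: enn2real_leI)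
  qed
  have "renyi_divergence \<alpha> P Q = ereal (ln (enn2real I) / (\<alpha> - 1))"
    unfolding renyi_divergence_def I_def t_def h_def using ac setsPQ I_top unfolding I_def t_def h_def
    by (simp add: Let_def)
  also have "\<dots> \<le> ereal (ln B / (\<alpha> - 1))"
    using I_pos I_B \<alpha> by (simp add: divide_right_mono)
  finally show ?thesis unfolding P_def Q_def .
qed

lemma layers_shift:
  fixes M0 :: "'a measure" and p :: "'a \<Rightarrow> 'b \<Rightarrow> 'a" and q :: "'b \<Rightarrow> 'a \<Rightarrow> real"
    and c :: "nat \<Rightarrow> (nat \<Rightarrow> 'a) \<Rightarrow> 'b"
  assumes M0: "sigma_finite_measure M0"
    and TP: "\<And>b H. H \<in> borel_measurable M0 \<Longrightarrow> (\<integral>\<^sup>+x. H (p x b) * ennreal (q b x) \<partial>M0) = integral\<^sup>N M0 H"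
    and q0: "\<And>b x. q b x \<ge> 0"
    and dep: "\<And>l N N'. (\<And>k. k < l \<Longrightarrow> N k = N' k) \<Longrightarrow> c l N = c l N'"
    and mp: "\<And>L l. l < L \<Longrightarrow> (\<lambda>N. p (N l) (c l N)) \<in> PiM {..<L} (\<lambda>_. M0) \<rightarrow>\<^sub>M M0"
    and mq: "\<And>L l. l < L \<Longrightarrow> (\<lambda>N. q (c l N) (N l)) \<in> borel_measurable (PiM {..<L} (\<lambda>_. M0))"
    and H: "H \<in> borel_measurable (PiM {..<L} (\<lambda>_. M0))"
  shows "(\<integral>\<^sup>+N. H (\<lambda>l\<in>{..<L}. p (N l) (c l N)) * ennreal (\<Prod>l<L. q (c l N) (N l)) \<partial>PiM {..<L} (\<lambda>_. M0))
         = integral\<^sup>N (PiM {..<L} (\<lambda>_. M0)) H"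
  using H
proof (induction L arbitrary: H)
  case 0
  interpret product_sigma_finite "\<lambda>_. M0" using M0 by (simp add: product_sigma_finite_def)
  show ?case unfolding lessThan_0 by (subst (1 2) nn_integral_empty) (auto simp: restrict_def)
next
  case (Suc L)
  interpret product_sigma_finite "\<lambda>_. M0" using M0 by (simp add: product_sigma_finite_def)
  interpret M0: sigma_finite_measure M0 by (rule M0)
  have ins: "{..<Suc L} = insert L {..<L}" by auto
  have Hm[measurable]: "H \<in> borel_measurable (PiM (insert L {..<L}) (\<lambda>_. M0))" using Suc.prems ins by simp
  have resm: "(\<lambda>N. \<lambda>l\<in>{..<L'}. p (N l) (c l N)) \<in> PiM {..<L'} (\<lambda>_. M0) \<rightarrow>\<^sub>M PiM {..<L'} (\<lambda>_. M0)" for L'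
    by (intro measurable_restrict mp) auto
  have prodm: "(\<lambda>N. \<Prod>l<L'. q (c l N) (N l)) \<in> borel_measurable (PiM {..<L'} (\<lambda>_. M0))" for L'
    by (intro borel_measurable_prod mq) auto
  define G where "G z = (\<integral>\<^sup>+y. H (z(L := y)) \<partial>M0)" for z
  have Gm: "G \<in> borel_measurable (PiM {..<L} (\<lambda>_. M0))"
    unfolding G_def
  proof (rule sigma_finite_measure.borel_measurable_nn_integral)
    show "sigma_finite_measure M0" by (rule M0)
    show "(\<lambda>(z, y). H (z(L := y))) \<in> borel_measurable (PiM {..<L} (\<lambda>_. M0) \<Otimes>\<^sub>M M0)"
      by measurable
  qed
  have "(\<integral>\<^sup>+N. H (\<lambda>l\<in>{..<Suc L}. p (N l) (c l N)) * ennreal (\<Prod>l<Suc L. q (c l N) (N l)) \<partial>PiM {..<Suc L} (\<lambda>_. M0))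
      = (\<integral>\<^sup>+x. (\<integral>\<^sup>+y. H (\<lambda>l\<in>{..<Suc L}. p ((x(L := y)) l) (c l (x(L := y))))
            * ennreal (\<Prod>l<Suc L. q (c l (x(L := y))) ((x(L := y)) l)) \<partial>M0) \<partial>PiM {..<L} (\<lambda>_. M0))"
    unfolding ins
  proof (rule product_nn_integral_insert)
    show "(\<lambda>N. H (\<lambda>l\<in>insert L {..<L}. p (N l) (c l N)) * ennreal (\<Prod>l\<in>insert L {..<L}. q (c l N) (N l)))
        \<in> borel_measurable (PiM (insert L {..<L}) (\<lambda>_. M0))"
      using resm[of "Suc L"] prodm[of "Suc L"] unfolding ins
      by (intro borel_measurable_times_ennreal measurable_compose[OF _ Hm] measurable_compose[OF _ measurable_ennreal]) auto
  qed auto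
  also have "\<dots> = (\<integral>\<^sup>+x. G (\<lambda>l\<in>{..<L}. p (x l) (c l x)) * ennreal (\<Prod>l<L. q (c l x) (x l)) \<partial>PiM {..<L} (\<lambda>_. M0))"
  proof (rule nn_integral_cong)
    fix x assume x: "x \<in> space (PiM {..<L} (\<lambda>_. M0))"
    define z where "z = (\<lambda>l\<in>{..<L}. p (x l) (c l x))"
    have z: "z \<in> space (PiM {..<L} (\<lambda>_. M0))" unfolding z_def using measurable_space[OF resm[of L] x] by auto
    have dc: "c l (x(L := y)) = c l x" if "l \<le> L" for l y
      using that by (intro dep) auto
    have Hz[measurable]: "(\<lambda>y. H (z(L := y))) \<in> borel_measurable M0"
      using measurable_comp[OF measurable_component_update[OF z] Hm] by (simp add: comp_def)
    have pm: "(\<lambda>y. p y (c L x)) \<in> M0 \<rightarrow>\<^sub>M M0"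
    proof -
      have "(\<lambda>N. p (N L) (c L N)) \<in> PiM (insert L {..<L}) (\<lambda>_. M0) \<rightarrow>\<^sub>M M0" using mp[of L "Suc L"] ins by simp
      from measurable_comp[OF measurable_component_update[OF x] this]
      show ?thesis using dc[of L] by (simp add: comp_def)
    qed
    have qm[measurable]: "(\<lambda>y. q (c L x) y) \<in> borel_measurable M0"
    proof -
      have "(\<lambda>N. q (c L N) (N L)) \<in> borel_measurable (PiM (insert L {..<L}) (\<lambda>_. M0))" using mq[of L "Suc L"] ins by simp
      from measurable_comp[OF measurable_component_update[OF x] this]
      show ?thesis using dc[of L] by (simp add: comp_def)
    qed
    have Hzp[measurable]: "(\<lambda>y. H (z(L := p y (c L x)))) \<in> borel_measurable M0"
      using measurable_comp[OF pm Hz] by (simp add: comp_def)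
    have e1: "(\<lambda>l\<in>{..<Suc L}. p ((x(L := y)) l) (c l (x(L := y)))) = z(L := p y (c L x))" for y
      unfolding z_def using dc by (auto simp: fun_eq_iff)
    have e2: "(\<Prod>l<Suc L. q (c l (x(L := y))) ((x(L := y)) l)) = q (c L x) y * (\<Prod>l<L. q (c l x) (x l))" for y
      using dc by (auto simp: prod.lessThan_Suc mult.commute intro!: prod.cong)
    have "(\<integral>\<^sup>+y. H (\<lambda>l\<in>{..<Suc L}. p ((x(L := y)) l) (c l (x(L := y))))
            * ennreal (\<Prod>l<Suc L. q (c l (x(L := y))) ((x(L := y)) l)) \<partial>M0)
        = (\<integral>\<^sup>+y. (H (z(L := p y (c L x))) * ennreal (q (c L x) y)) * ennreal (\<Prod>l<L. q (c l x) (x l)) \<partial>M0)"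
      using e1 e2 q0 by (intro nn_integral_cong) (simp add: ennreal_mult prod_nonneg mult_ac)
    also have "\<dots> = (\<integral>\<^sup>+y. H (z(L := p y (c L x))) * ennreal (q (c L x) y) \<partial>M0) * ennreal (\<Prod>l<L. q (c l x) (x l))"
      by (rule nn_integral_multc) simp
    also have "(\<integral>\<^sup>+y. H (z(L := p y (c L x))) * ennreal (q (c L x) y) \<partial>M0) = G z"
      unfolding G_def using TP[of "\<lambda>y. H (z(L := y))" "c L x"] by simp
    finally show "(\<integral>\<^sup>+y. H (\<lambda>l\<in>{..<Suc L}. p ((x(L := y)) l) (c l (x(L := y))))
            * ennreal (\<Prod>l<Suc L. q (c l (x(L := y))) ((x(L := y)) l)) \<partial>M0)
        = G (\<lambda>l\<in>{..<L}. p (x l) (c l x)) * ennreal (\<Prod>l<L. q (c l x) (x l))"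
      unfolding z_def .
  qed
  also have "\<dots> = integral\<^sup>N (PiM {..<L} (\<lambda>_. M0)) G"
    by (rule Suc.IH[OF Gm])
  also have "\<dots> = integral\<^sup>N (PiM {..<Suc L} (\<lambda>_. M0)) H"
    unfolding G_def ins by (rule product_nn_integral_insert[symmetric]) auto
  finally show ?case .
qed

lemma layers_moment:
  fixes M0 :: "'a measure" and q :: "'b \<Rightarrow> 'a \<Rightarrow> real"
    and c :: "nat \<Rightarrow> (nat \<Rightarrow> 'a) \<Rightarrow> 'b" and B :: ennreal
  assumes M0: "sigma_finite_measure M0"
    and q0: "\<And>b x. q b x \<ge> 0"
    and dep: "\<And>l N N'. (\<And>k. k < l \<Longrightarrow> N k = N' k) \<Longrightarrow> c l N = c l N'"
    and mq: "\<And>L l. l < L \<Longrightarrow> (\<lambda>N. q (c l N) (N l)) \<in> borel_measurable (PiM {..<L} (\<lambda>_. M0))"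
    and Bnd: "\<And>l N. (\<integral>\<^sup>+y. ennreal (q (c l N) y powr \<alpha>) \<partial>M0) \<le> B"
  shows "(\<integral>\<^sup>+N. ennreal ((\<Prod>l<L. q (c l N) (N l)) powr \<alpha>) \<partial>PiM {..<L} (\<lambda>_. M0)) \<le> B ^ L"
proof (induction L)
  case 0
  interpret product_sigma_finite "\<lambda>_. M0" using M0 by (simp add: product_sigma_finite_def)
  show ?case unfolding lessThan_0 by (subst nn_integral_empty) auto
next
  case (Suc L)
  interpret product_sigma_finite "\<lambda>_. M0" using M0 by (simp add: product_sigma_finite_def)
  have ins: "{..<Suc L} = insert L {..<L}" by auto
  have prodm: "(\<lambda>N. \<Prod>l<L'. q (c l N) (N l)) \<in> borel_measurable (PiM {..<L'} (\<lambda>_. M0))" for L'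
    by (intro borel_measurable_prod mq) auto
  have "(\<integral>\<^sup>+N. ennreal ((\<Prod>l<Suc L. q (c l N) (N l)) powr \<alpha>) \<partial>PiM {..<Suc L} (\<lambda>_. M0))
      = (\<integral>\<^sup>+x. (\<integral>\<^sup>+y. ennreal ((\<Prod>l<Suc L. q (c l (x(L := y))) ((x(L := y)) l)) powr \<alpha>) \<partial>M0) \<partial>PiM {..<L} (\<lambda>_. M0))"
    unfolding ins
  proof (rule product_nn_integral_insert)
    show "(\<lambda>N. ennreal ((\<Prod>l\<in>insert L {..<L}. q (c l N) (N l)) powr \<alpha>)) \<in> borel_measurable (PiM (insert L {..<L}) (\<lambda>_. M0))"
      using prodm[of "Suc L"] unfolding ins by measurable
  qed auto
  also have "\<dots> \<le> (\<integral>\<^sup>+x. ennreal ((\<Prod>l<L. q (c l x) (x l)) powr \<alpha>) * B \<partial>PiM {..<L} (\<lambda>_. M0))"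
  proof (rule nn_integral_mono)
    fix x assume x: "x \<in> space (PiM {..<L} (\<lambda>_. M0))"
    have dc: "c l (x(L := y)) = c l x" if "l \<le> L" for l y
      using that by (intro dep) auto
    have qm[measurable]: "(\<lambda>y. q (c L x) y) \<in> borel_measurable M0"
    proof -
      have "(\<lambda>N. q (c L N) (N L)) \<in> borel_measurable (PiM (insert L {..<L}) (\<lambda>_. M0))" using mq[of L "Suc L"] ins by simp
      from measurable_comp[OF measurable_component_update[OF x] this]
      show ?thesis using dc[of L] by (simp add: comp_def)
    qed
    have "(\<integral>\<^sup>+y. ennreal ((\<Prod>l<Suc L. q (c l (x(L := y))) ((x(L := y)) l)) powr \<alpha>) \<partial>M0)
        = (\<integral>\<^sup>+y. ennreal ((\<Prod>l<L. q (c l x) (x l)) powr \<alpha>) * ennreal (q (c L x) y powr \<alpha>) \<partial>M0)"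
    proof (intro nn_integral_cong)
      fix y
      have e2: "(\<Prod>l<Suc L. q (c l (x(L := y))) ((x(L := y)) l)) = (\<Prod>l<L. q (c l x) (x l)) * q (c L x) y"
        using dc by (auto simp: prod.lessThan_Suc intro!: prod.cong)
      show "ennreal ((\<Prod>l<Suc L. q (c l (x(L := y))) ((x(L := y)) l)) powr \<alpha>)
          = ennreal ((\<Prod>l<L. q (c l x) (x l)) powr \<alpha>) * ennreal (q (c L x) y powr \<alpha>)"
        unfolding e2 using q0 by (simp add: powr_mult prod_nonneg ennreal_mult')
    qed
    also have "\<dots> = ennreal ((\<Prod>l<L. q (c l x) (x l)) powr \<alpha>) * (\<integral>\<^sup>+y. ennreal (q (c L x) y powr \<alpha>) \<partial>M0)"
      by (rule nn_integral_cmult) simp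
    also have "\<dots> \<le> ennreal ((\<Prod>l<L. q (c l x) (x l)) powr \<alpha>) * B"
      by (intro mult_left_mono Bnd) simp
    finally show "(\<integral>\<^sup>+y. ennreal ((\<Prod>l<Suc L. q (c l (x(L := y))) ((x(L := y)) l)) powr \<alpha>) \<partial>M0)
        \<le> ennreal ((\<Prod>l<L. q (c l x) (x l)) powr \<alpha>) * B" .
  qed
  also have "\<dots> = (\<integral>\<^sup>+x. ennreal ((\<Prod>l<L. q (c l x) (x l)) powr \<alpha>) \<partial>PiM {..<L} (\<lambda>_. M0)) * B"
    using prodm[of L] by (intro nn_integral_multc measurable_compose[OF _ measurable_ennreal] powr_real_measurable) auto
  also have "\<dots> \<le> B ^ L * B" by (intro mult_right_mono Suc.IH) simp
  finally show ?case by (simp add: mult.commute)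
qed

lemma nn_integral_normal_density_1:
  assumes "\<sigma> > 0" shows "(\<integral>\<^sup>+x. ennreal (normal_density \<mu> \<sigma> x) \<partial>lborel) = 1"
proof -
  interpret prob_space "density lborel (normal_density \<mu> \<sigma>)" using assms by (rule prob_space_normal_density)
  have "emeasure (density lborel (normal_density \<mu> \<sigma>)) UNIV = 1"
    using emeasure_space_1 by simp
  then show ?thesis by (simp add: emeasure_density)
qed

lemma gauss_shift:
  fixes H :: "real \<Rightarrow> ennreal" and s c :: real
  assumes s: "s > 0" and H[measurable]: "H \<in> borel_measurable borel"
  shows "(\<integral>\<^sup>+x. H (x + c) * ennreal (normal_density 0 s (x + c) / normal_density 0 s x)
            \<partial>density lborel (normal_density 0 s))
        = (\<integral>\<^sup>+x. H x \<partial>density lborel (normal_density 0 s))"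
proof -
  let ?\<phi> = "normal_density 0 s"
  have "(\<integral>\<^sup>+x. H (x + c) * ennreal (?\<phi> (x + c) / ?\<phi> x) \<partial>density lborel ?\<phi>)
      = (\<integral>\<^sup>+x. ennreal (?\<phi> x) * (H (x + c) * ennreal (?\<phi> (x + c) / ?\<phi> x)) \<partial>lborel)"
    by (simp add: nn_integral_density normal_density_nonneg)
  also have "\<dots> = (\<integral>\<^sup>+x. (\<lambda>y. H y * ennreal (?\<phi> y)) (c + x) \<partial>lborel)"
  proof (intro nn_integral_cong)
    fix x
    have "?\<phi> x > 0" using s by (rule normal_density_pos)
    then have "ennreal (?\<phi> x) * ennreal (?\<phi> (x + c) / ?\<phi> x) = ennreal (?\<phi> (x + c))"
      by (simp add: ennreal_mult'[symmetric] normal_density_nonneg)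
    then show "ennreal (?\<phi> x) * (H (x + c) * ennreal (?\<phi> (x + c) / ?\<phi> x)) = (\<lambda>y. H y * ennreal (?\<phi> y)) (c + x)"
      by (simp add: add.commute mult_ac)
  qed
  also have "\<dots> = (\<integral>\<^sup>+y. H y * ennreal (?\<phi> y) \<partial>distr lborel borel ((+) c))"
    by (simp add: nn_integral_distr)
  also have "\<dots> = (\<integral>\<^sup>+y. H y * ennreal (?\<phi> y) \<partial>lborel)"
    by (simp add: lborel_distr_plus)
  also have "\<dots> = (\<integral>\<^sup>+x. H x \<partial>density lborel ?\<phi>)"
    by (simp add: nn_integral_density normal_density_nonneg mult.commute)
  finally show ?thesis .
qed

lemma gauss_ratio_powr:
  fixes s c \<alpha> x :: real
  assumes s: "s > 0"
  shows "normal_density 0 s x * (normal_density 0 s (x + c) / normal_density 0 s x) powr \<alpha>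
       = exp (\<alpha> * (\<alpha> - 1) * c\<^sup>2 / (2 * s\<^sup>2)) * normal_density (- (\<alpha> * c)) s x"
proof -
  define C where "C = 1 / sqrt (2 * pi * s\<^sup>2)"
  have C: "C > 0" unfolding C_def using s by simp
  have r: "normal_density 0 s (x + c) / normal_density 0 s x = exp (- (2 * x * c + c\<^sup>2) / (2 * s\<^sup>2))"
    unfolding normal_density_def C_def[symmetric] using C s
    by (simp add: exp_diff[symmetric] power2_eq_square field_simps)
  have "normal_density 0 s x * (normal_density 0 s (x + c) / normal_density 0 s x) powr \<alpha>
      = C * exp (- x\<^sup>2 / (2 * s\<^sup>2)) * exp (\<alpha> * (- (2 * x * c + c\<^sup>2) / (2 * s\<^sup>2)))"
    unfolding r by (simp add: powr_def normal_density_def C_def field_simps)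
  also have "\<dots> = C * exp (- x\<^sup>2 / (2 * s\<^sup>2) + \<alpha> * (- (2 * x * c + c\<^sup>2) / (2 * s\<^sup>2)))"
    by (simp only: exp_add mult.assoc)
  also have "- x\<^sup>2 / (2 * s\<^sup>2) + \<alpha> * (- (2 * x * c + c\<^sup>2) / (2 * s\<^sup>2))
      = \<alpha> * (\<alpha> - 1) * c\<^sup>2 / (2 * s\<^sup>2) + (- (x - - (\<alpha> * c))\<^sup>2 / (2 * s\<^sup>2))"
    using s by (simp add: field_simps power2_eq_square)
  also have "C * exp (\<alpha> * (\<alpha> - 1) * c\<^sup>2 / (2 * s\<^sup>2) + (- (x - - (\<alpha> * c))\<^sup>2 / (2 * s\<^sup>2)))
      = exp (\<alpha> * (\<alpha> - 1) * c\<^sup>2 / (2 * s\<^sup>2)) * normal_density (- (\<alpha> * c)) s x"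
    unfolding normal_density_def C_def[symmetric] by (simp only: exp_add mult_ac)
  finally show ?thesis .
qed

lemma gauss_moment:
  fixes s c \<alpha> :: real
  assumes s: "s > 0"
  shows "(\<integral>\<^sup>+x. ennreal ((normal_density 0 s (x + c) / normal_density 0 s x) powr \<alpha>)
            \<partial>density lborel (normal_density 0 s))
        = ennreal (exp (\<alpha> * (\<alpha> - 1) * c\<^sup>2 / (2 * s\<^sup>2)))"
proof -
  have "(\<integral>\<^sup>+x. ennreal ((normal_density 0 s (x + c) / normal_density 0 s x) powr \<alpha>)
            \<partial>density lborel (normal_density 0 s))
      = (\<integral>\<^sup>+x. ennreal (exp (\<alpha> * (\<alpha> - 1) * c\<^sup>2 / (2 * s\<^sup>2))) * ennreal (normal_density (- (\<alpha> * c)) s x) \<partial>lborel)"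
    by (simp add: nn_integral_density normal_density_nonneg ennreal_mult'[symmetric] gauss_ratio_powr[OF s])
  also have "\<dots> = ennreal (exp (\<alpha> * (\<alpha> - 1) * c\<^sup>2 / (2 * s\<^sup>2)))"
    using s by (simp add: nn_integral_cmult nn_integral_normal_density_1)
  finally show ?thesis .
qed

lemma PiM_shift:
  fixes M :: "'i \<Rightarrow> 'a measure" and p :: "'i \<Rightarrow> 'a \<Rightarrow> 'a" and q :: "'i \<Rightarrow> 'a \<Rightarrow> real"
  assumes ps: "product_sigma_finite M" and fin: "finite I"
    and p: "\<And>i. i \<in> I \<Longrightarrow> p i \<in> M i \<rightarrow>\<^sub>M M i"
    and q: "\<And>i. i \<in> I \<Longrightarrow> q i \<in> borel_measurable (M i)"
    and q0: "\<And>i x. q i x \<ge> 0"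
    and TP: "\<And>i H. i \<in> I \<Longrightarrow> H \<in> borel_measurable (M i) \<Longrightarrow>
               (\<integral>\<^sup>+x. H (p i x) * ennreal (q i x) \<partial>M i) = integral\<^sup>N (M i) H"
    and H: "H \<in> borel_measurable (PiM I M)"
  shows "(\<integral>\<^sup>+x. H (\<lambda>i\<in>I. p i (x i)) * ennreal (\<Prod>i\<in>I. q i (x i)) \<partial>PiM I M) = integral\<^sup>N (PiM I M) H"
  using fin H p q TP
proof (induction I arbitrary: H rule: finite_induct)
  case empty
  interpret product_sigma_finite M by (rule ps)
  show ?case by (subst (1 2) nn_integral_empty) (auto simp: restrict_def)
next
  case (insert i I)
  interpret product_sigma_finite M by (rule ps)
  have pI: "\<And>j. j \<in> I \<Longrightarrow> p j \<in> M j \<rightarrow>\<^sub>M M j" and pi: "p i \<in> M i \<rightarrow>\<^sub>M M i"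
    using insert.prems by auto
  have qI: "\<And>j. j \<in> I \<Longrightarrow> q j \<in> borel_measurable (M j)" and qi: "q i \<in> borel_measurable (M i)"
    using insert.prems by auto
  have Hm[measurable]: "H \<in> borel_measurable (PiM (insert i I) M)" using insert.prems by simp
  have resm: "(\<lambda>x. \<lambda>j\<in>J. p j (x j)) \<in> PiM J M \<rightarrow>\<^sub>M PiM J M" if "J \<subseteq> insert i I" for J
    using that insert.prems(2)
    by (intro measurable_restrict measurable_compose[OF measurable_component_singleton]) auto
  have prodm: "(\<lambda>x. \<Prod>j\<in>J. q j (x j)) \<in> borel_measurable (PiM J M)" if "J \<subseteq> insert i I" for J
    using that insert.prems(3)
    by (intro borel_measurable_prod measurable_compose[OF measurable_component_singleton]) auto
  define G where "G z = (\<integral>\<^sup>+y. H (z(i := y)) \<partial>M i)" for z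
  have Gm: "G \<in> borel_measurable (PiM I M)"
    unfolding G_def
  proof (rule sigma_finite_measure.borel_measurable_nn_integral)
    show "sigma_finite_measure (M i)" by (rule sigma_finite_measures)
    show "(\<lambda>(z, y). H (z(i := y))) \<in> borel_measurable (PiM I M \<Otimes>\<^sub>M M i)"
      by measurable
  qed
  have "(\<integral>\<^sup>+x. H (\<lambda>j\<in>insert i I. p j (x j)) * ennreal (\<Prod>j\<in>insert i I. q j (x j)) \<partial>PiM (insert i I) M)
      = (\<integral>\<^sup>+x. (\<integral>\<^sup>+y. H (\<lambda>j\<in>insert i I. p j ((x(i := y)) j)) * ennreal (\<Prod>j\<in>insert i I. q j ((x(i := y)) j)) \<partial>M i) \<partial>PiM I M)"
  proof (rule product_nn_integral_insert)
    show "finite I" "i \<notin> I" by fact+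
    show "(\<lambda>x. H (\<lambda>j\<in>insert i I. p j (x j)) * ennreal (\<Prod>j\<in>insert i I. q j (x j))) \<in> borel_measurable (PiM (insert i I) M)"
      using resm[of "insert i I"] prodm[of "insert i I"] by (intro borel_measurable_times_ennreal measurable_compose[OF _ Hm] measurable_compose[OF _ measurable_ennreal]) auto
  qed
  also have "\<dots> = (\<integral>\<^sup>+x. G (\<lambda>j\<in>I. p j (x j)) * ennreal (\<Prod>j\<in>I. q j (x j)) \<partial>PiM I M)"
  proof (rule nn_integral_cong)
    fix x assume x: "x \<in> space (PiM I M)"
    define z where "z = (\<lambda>j\<in>I. p j (x j))"
    have z: "z \<in> space (PiM I M)" unfolding z_def using measurable_space[OF resm[of I] x] by auto
    have Hz[measurable]: "(\<lambda>y. H (z(i := y))) \<in> borel_measurable (M i)"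
      using measurable_comp[OF measurable_component_update[OF z insert.hyps(2)] Hm] by (simp add: comp_def)
    have Hzp[measurable]: "(\<lambda>y. H (z(i := p i y))) \<in> borel_measurable (M i)"
      using measurable_comp[OF pi Hz] by (simp add: comp_def)
    note qi[measurable]
    have e1: "(\<lambda>j\<in>insert i I. p j ((x(i := y)) j)) = (\<lambda>j\<in>I. p j (x j))(i := p i y)" for y
      using insert.hyps by (auto simp: fun_eq_iff)
    have e2: "(\<Prod>j\<in>insert i I. q j ((x(i := y)) j)) = q i y * (\<Prod>j\<in>I. q j (x j))" for y
      using insert.hyps by (auto intro!: prod.cong)
    have "(\<integral>\<^sup>+y. H (\<lambda>j\<in>insert i I. p j ((x(i := y)) j)) * ennreal (\<Prod>j\<in>insert i I. q j ((x(i := y)) j)) \<partial>M i)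
        = (\<integral>\<^sup>+y. (H ((\<lambda>j\<in>I. p j (x j))(i := p i y)) * ennreal (q i y)) * ennreal (\<Prod>j\<in>I. q j (x j)) \<partial>M i)"
      using e1 e2 q0 by (intro nn_integral_cong) (simp add: ennreal_mult prod_nonneg mult_ac)
    also have "\<dots> = (\<integral>\<^sup>+y. H ((\<lambda>j\<in>I. p j (x j))(i := p i y)) * ennreal (q i y) \<partial>M i) * ennreal (\<Prod>j\<in>I. q j (x j))"
      unfolding z_def[symmetric] by (rule nn_integral_multc) simp
    also have "(\<integral>\<^sup>+y. H ((\<lambda>j\<in>I. p j (x j))(i := p i y)) * ennreal (q i y) \<partial>M i) = G (\<lambda>j\<in>I. p j (x j))"
      unfolding G_def z_def[symmetric] using insert.prems(4)[of i "\<lambda>y. H (z(i := y))"] by simp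
    finally show "(\<integral>\<^sup>+y. H (\<lambda>j\<in>insert i I. p j ((x(i := y)) j)) * ennreal (\<Prod>j\<in>insert i I. q j ((x(i := y)) j)) \<partial>M i)
        = G (\<lambda>j\<in>I. p j (x j)) * ennreal (\<Prod>j\<in>I. q j (x j))" .
  qed
  also have "\<dots> = integral\<^sup>N (PiM I M) G"
    by (rule insert.IH[OF Gm]) (use insert.prems in auto)
  also have "\<dots> = integral\<^sup>N (PiM (insert i I) M) H"
    unfolding G_def by (rule product_nn_integral_insert[symmetric]) (use insert.hyps in auto)
  finally show ?case .
qed


definition gL :: "real \<Rightarrow> real measure" where
  "gL s = density lborel (normal_density 0 s)"

definition MLay :: "nat \<Rightarrow> real \<Rightarrow> (nat \<Rightarrow> 'd::finite \<Rightarrow> real) measure" where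
  "MLay n s = PiM {..<n} (\<lambda>i. PiM UNIV (\<lambda>d::'d. gL s))"

definition gratio :: "real \<Rightarrow> real \<Rightarrow> real \<Rightarrow> real" where
  "gratio s a b = normal_density 0 s (a + b) / normal_density 0 s a"

definition pL :: "nat \<Rightarrow> (nat \<Rightarrow> 'd::finite \<Rightarrow> real) \<Rightarrow> (nat \<Rightarrow> 'd \<Rightarrow> real) \<Rightarrow> (nat \<Rightarrow> 'd \<Rightarrow> real)" where
  "pL n x c = (\<lambda>i\<in>{..<n}. \<lambda>d\<in>UNIV. x i d + c i d)"

definition qL :: "real \<Rightarrow> nat \<Rightarrow> (nat \<Rightarrow> 'd::finite \<Rightarrow> real) \<Rightarrow> (nat \<Rightarrow> 'd \<Rightarrow> real) \<Rightarrow> real" where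
  "qL s n c x = (\<Prod>i<n. \<Prod>d\<in>UNIV. gratio s (x i d) (c i d))"

lemma gratio_nonneg: "s > 0 \<Longrightarrow> gratio s a b \<ge> 0"
  unfolding gratio_def by (simp add: normal_density_nonneg)

lemma qL_nonneg: "s > 0 \<Longrightarrow> qL s n c x \<ge> 0"
  unfolding qL_def by (intro prod_nonneg gratio_nonneg) auto

lemma prob_gL: "s > 0 \<Longrightarrow> prob_space (gL s)"
  unfolding gL_def by (rule prob_space_normal_density)

lemma sets_gL[simp]: "sets (gL s) = sets borel"
  unfolding gL_def by simp

lemma prob_inner: "s > 0 \<Longrightarrow> prob_space (PiM UNIV (\<lambda>d::'d::finite. gL s))"
  by (intro prob_space_PiM prob_gL)

lemma prob_MLay: "s > 0 \<Longrightarrow> prob_space (MLay n s :: (nat \<Rightarrow> 'd::finite \<Rightarrow> real) measure)"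
  unfolding MLay_def by (intro prob_space_PiM prob_inner)

lemma comp_gL[measurable]: "(\<lambda>x. x d) \<in> borel_measurable (PiM UNIV (\<lambda>d::'d::finite. gL s))"
  using measurable_component_singleton[of d UNIV "\<lambda>d::'d. gL s"] by (simp cong: measurable_cong_sets)

lemma inner_TP:
  fixes c :: "'d::finite \<Rightarrow> real"
  assumes s: "s > 0" and H: "H \<in> borel_measurable (PiM UNIV (\<lambda>d::'d. gL s))"
  shows "(\<integral>\<^sup>+x. H (\<lambda>d\<in>UNIV. x d + c d) * ennreal (\<Prod>d\<in>UNIV. gratio s (x d) (c d)) \<partial>PiM UNIV (\<lambda>d::'d. gL s))
       = integral\<^sup>N (PiM UNIV (\<lambda>d::'d. gL s)) H"
proof (rule PiM_shift[where p = "\<lambda>d x. x + c d" and q = "\<lambda>d x. gratio s x (c d)", OF _ _ _ _ _ _ H])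
  show "product_sigma_finite (\<lambda>d::'d. gL s)"
    unfolding product_sigma_finite_def using prob_gL[OF s] by (simp add: prob_space_imp_sigma_finite)
  show "(\<lambda>x. x + c d) \<in> gL s \<rightarrow>\<^sub>M gL s" for d
    by (simp cong: measurable_cong_sets)
  show "(\<lambda>x. gratio s x (c d)) \<in> borel_measurable (gL s)" for d
    unfolding gratio_def by (simp cong: measurable_cong_sets)
  show "gratio s x (c d) \<ge> 0" for d x using s by (rule gratio_nonneg)
  show "(\<integral>\<^sup>+x. G (x + c d) * ennreal (gratio s x (c d)) \<partial>gL s) = integral\<^sup>N (gL s) G"
    if "G \<in> borel_measurable (gL s)" for d G
  proof -
    have "G \<in> borel_measurable borel" using that by (simp cong: measurable_cong_sets)
    then show ?thesis unfolding gL_def gratio_def by (rule gauss_shift[OF s])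
  qed
qed simp

lemma layer_TP:
  fixes c :: "nat \<Rightarrow> 'd::finite \<Rightarrow> real"
  assumes s: "s > 0" and H: "H \<in> borel_measurable (MLay n s :: (nat \<Rightarrow> 'd \<Rightarrow> real) measure)"
  shows "(\<integral>\<^sup>+x. H (pL n x c) * ennreal (qL s n c x) \<partial>MLay n s) = integral\<^sup>N (MLay n s) H"
  unfolding pL_def qL_def MLay_def
proof (rule PiM_shift[where p = "\<lambda>i x. \<lambda>d\<in>UNIV. x d + c i d" and q = "\<lambda>i x. \<Prod>d\<in>UNIV. gratio s (x d) (c i d)"])
  show "product_sigma_finite (\<lambda>i. PiM UNIV (\<lambda>d::'d. gL s))"
    unfolding product_sigma_finite_def using prob_space_imp_sigma_finite[OF prob_inner[OF s]] by simp
  show "(\<lambda>x. \<lambda>d\<in>UNIV. x d + c i d) \<in> PiM UNIV (\<lambda>d::'d. gL s) \<rightarrow>\<^sub>M PiM UNIV (\<lambda>d::'d. gL s)" for i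
    by (intro measurable_restrict) (simp cong: measurable_cong_sets, measurable)
  show "(\<lambda>x. \<Prod>d\<in>UNIV. gratio s (x d) (c i d)) \<in> borel_measurable (PiM UNIV (\<lambda>d::'d. gL s))" for i
    unfolding gratio_def by (intro borel_measurable_prod) (simp cong: measurable_cong_sets)
  show "(\<Prod>d\<in>UNIV. gratio s (x d) (c i d)) \<ge> 0" for i x using s by (intro prod_nonneg gratio_nonneg) auto
  show "(\<integral>\<^sup>+x. G (\<lambda>d\<in>UNIV. x d + c i d) * ennreal (\<Prod>d\<in>UNIV. gratio s (x d) (c i d)) \<partial>PiM UNIV (\<lambda>d::'d. gL s))
      = integral\<^sup>N (PiM UNIV (\<lambda>d::'d. gL s)) G"
    if "G \<in> borel_measurable (PiM UNIV (\<lambda>d::'d. gL s))" for i G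
    by (rule inner_TP[OF s that])
  show "H \<in> borel_measurable (PiM {..<n} (\<lambda>i. PiM UNIV (\<lambda>d::'d. gL s)))" using H unfolding MLay_def .
qed simp

lemma layer_moment:
  fixes c :: "nat \<Rightarrow> 'd::finite \<Rightarrow> real"
  assumes s: "s > 0"
  shows "(\<integral>\<^sup>+x. ennreal (qL s n c x powr \<alpha>) \<partial>(MLay n s :: (nat \<Rightarrow> 'd \<Rightarrow> real) measure))
       = ennreal (exp (\<Sum>i<n. \<Sum>d\<in>UNIV. \<alpha> * (\<alpha> - 1) * (c i d)\<^sup>2 / (2 * s\<^sup>2)))"
proof -
  interpret O: product_sigma_finite "\<lambda>i. PiM UNIV (\<lambda>d::'d. gL s)"
    unfolding product_sigma_finite_def using prob_space_imp_sigma_finite[OF prob_inner[OF s]] by simp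
  interpret I: product_sigma_finite "\<lambda>d::'d. gL s"
    unfolding product_sigma_finite_def using prob_gL[OF s] by (simp add: prob_space_imp_sigma_finite)
  have rm: "(\<lambda>z. ennreal (gratio s z b powr \<alpha>)) \<in> borel_measurable (gL s)" for b
    unfolding gratio_def by (simp cong: measurable_cong_sets)
  have "(\<integral>\<^sup>+x. ennreal (qL s n c x powr \<alpha>) \<partial>(MLay n s :: (nat \<Rightarrow> 'd \<Rightarrow> real) measure))
      = (\<integral>\<^sup>+x. (\<Prod>i<n. (\<lambda>i y. \<Prod>d\<in>UNIV. ennreal (gratio s (y d) (c i d) powr \<alpha>)) i (x i)) \<partial>PiM {..<n} (\<lambda>i. PiM UNIV (\<lambda>d::'d. gL s)))"
    unfolding MLay_def qL_def using s
    by (intro nn_integral_cong) (simp add: prod_powr_distrib prod_ennreal gratio_nonneg prod_nonneg)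
  also have "\<dots> = (\<Prod>i<n. \<integral>\<^sup>+y. (\<Prod>d\<in>UNIV. (\<lambda>d z. ennreal (gratio s z (c i d) powr \<alpha>)) d (y d)) \<partial>PiM UNIV (\<lambda>d::'d. gL s))"
    using rm by (intro O.product_nn_integral_prod borel_measurable_prod_ennreal
        measurable_compose[OF measurable_component_singleton]) auto
  also have "\<dots> = (\<Prod>i<n. \<Prod>d\<in>UNIV. \<integral>\<^sup>+z. ennreal (gratio s z (c i d) powr \<alpha>) \<partial>gL s)"
    using rm by (intro prod.cong refl I.product_nn_integral_prod) auto
  also have "\<dots> = (\<Prod>i<n. \<Prod>d\<in>UNIV. ennreal (exp (\<alpha> * (\<alpha> - 1) * (c i d)\<^sup>2 / (2 * s\<^sup>2))))"
    unfolding gL_def gratio_def using gauss_moment[OF s] by simp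
  also have "\<dots> = ennreal (exp (\<Sum>i<n. \<Sum>d\<in>UNIV. \<alpha> * (\<alpha> - 1) * (c i d)\<^sup>2 / (2 * s\<^sup>2)))"
    by (simp add: exp_sum prod_ennreal prod_nonneg)
  finally show ?thesis .
qed

primrec Kr :: "('w \<Rightarrow> 'x \<Rightarrow> real ^ 'd) \<Rightarrow> nat \<Rightarrow> (nat \<Rightarrow> 'x) \<Rightarrow> (nat \<Rightarrow> 'x) \<Rightarrow> (nat \<Rightarrow> nat \<Rightarrow> bool)
   \<Rightarrow> (nat \<Rightarrow> nat \<Rightarrow> bool) \<Rightarrow> nat \<Rightarrow> 'w \<Rightarrow> (nat \<Rightarrow> nat \<Rightarrow> 'd \<Rightarrow> real) \<Rightarrow> nat \<Rightarrow> real ^ 'd" where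
  "Kr f n X X' A A' r w N 0 = row_normalize (f w (X r))"
| "Kr f n X X' A A' r w N (Suc l) =
     row_normalize ((\<Sum>j<n. if A r j then gap_H f n X' A' w N l j else 0) + (\<chi> c. N l r c))"

definition hyb where
  "hyb f n X X' A A' r w N l j = (if j = r then Kr f n X X' A A' r w N l else gap_H f n X' A' w N l j)"

definition cv where
  "cv f n X X' A A' r w N l i = (if i = r then 0 else
      (\<Sum>j<n. if A' i j then gap_H f n X' A' w N l j else 0) - (\<Sum>j<n. if A i j then hyb f n X X' A A' r w N l j else 0))"

definition cc where
  "cc f n X X' A A' r w l N = (\<lambda>i d. cv f n X X' A A' r w N l i $ d)"

lemma hyb_eq:
  assumes noloop: "\<And>i. \<not> A i i" and XX: "\<And>j. j < n \<Longrightarrow> j \<noteq> r \<Longrightarrow> X' j = X j"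
    and R: "\<And>l' i d. l' < L \<Longrightarrow> i < n \<Longrightarrow> R l' i d = N l' i d + cc f n X X' A A' r w l' N i d"
    and l: "l \<le> L" and j: "j < n"
  shows "gap_H f n X A w R l j = hyb f n X X' A A' r w N l j"
  using l j
proof (induction l arbitrary: j)
  case 0
  then show ?case using XX[of j] by (auto simp: hyb_def)
next
  case (Suc l)
  have lL: "l < L" using Suc.prems by simp
  have IH: "\<And>k. k < n \<Longrightarrow> gap_H f n X A w R l k = hyb f n X X' A A' r w N l k"
    using Suc.IH lL by simp
  have S: "(\<Sum>k<n. if A j k then gap_H f n X A w R l k else 0) = (\<Sum>k<n. if A j k then hyb f n X X' A A' r w N l k else 0)"
    using IH by (intro sum.cong) auto
  have V: "(\<chi> c. R l j c) = (\<chi> c. N l j c) + cv f n X X' A A' r w N l j"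
    using lL Suc.prems R by (simp add: cc_def vec_eq_iff)
  show ?case
  proof (cases "j = r")
    case True
    have "(\<Sum>k<n. if A j k then hyb f n X X' A A' r w N l k else 0) = (\<Sum>k<n. if A r k then gap_H f n X' A' w N l k else 0)"
      using True noloop by (intro sum.cong) (auto simp: hyb_def)
    then show ?thesis using True S V by (simp add: hyb_def cv_def)
  next
    case False
    then show ?thesis using S V by (simp add: hyb_def cv_def add_ac)
  qed
qed

lemma gap_H_dep:
  assumes "\<And>k. k < l \<Longrightarrow> N k = N' k"
  shows "gap_H f n X A w N l j = gap_H f n X A w N' l j"
  using assms
proof (induction l arbitrary: j)
  case (Suc l)
  have IH: "gap_H f n X A w N l k = gap_H f n X A w N' l k" for k
    using Suc by auto
  have "N l = N' l" using Suc.prems by simp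
  then show ?case by (simp only: gap_H.simps IH)
qed simp

lemma Kr_dep:
  assumes "\<And>k. k < l \<Longrightarrow> N k = N' k"
  shows "Kr f n X X' A A' r w N l = Kr f n X X' A A' r w N' l"
proof (cases l)
  case (Suc m)
  have IH: "gap_H f n X' A' w N m k = gap_H f n X' A' w N' m k" for k
    using assms Suc by (intro gap_H_dep) auto
  have "N m = N' m" using assms Suc by simp
  then show ?thesis using Suc by (simp only: Kr.simps IH)
qed simp

lemma cc_dep:
  assumes "\<And>k. k < l \<Longrightarrow> N k = N' k"
  shows "cc f n X X' A A' r w l N = cc f n X X' A A' r w l N'"
proof -
  have 1: "gap_H f n X' A' w N l k = gap_H f n X' A' w N' l k" for k
    using assms by (intro gap_H_dep) auto
  have 2: "Kr f n X X' A A' r w N l = Kr f n X X' A A' r w N' l"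
    using assms by (intro Kr_dep) auto
  show ?thesis unfolding cc_def cv_def hyb_def by (simp only: 1 2)
qed

lemma norm_row_normalize_le: "norm (row_normalize x) \<le> 1"
  unfolding row_normalize_def by (cases "x = 0") auto

lemma norm_gap_H_le: "norm (gap_H f n X A w N l j) \<le> 1"
  by (cases l) (auto intro: norm_row_normalize_le)

lemma norm_Kr_le: "norm (Kr f n X X' A A' r w N l) \<le> 1"
  by (cases l) (auto intro: norm_row_normalize_le)

lemma sum_sq_vec: "(\<Sum>d\<in>UNIV. (v $ d)\<^sup>2) = (norm (v :: real ^ 'd))\<^sup>2"
  by (simp only: power2_norm_eq_inner inner_vec_def) (simp add: power2_eq_square)

lemma sq_sum_le: "((x::real) + y)\<^sup>2 \<le> 2 * x\<^sup>2 + 2 * y\<^sup>2"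
proof -
  have "0 \<le> (x - y)\<^sup>2" by simp
  then show ?thesis by (simp add: power2_eq_square algebra_simps)
qed

lemma cc_bound:
  assumes r: "r < n" and AA: "\<And>i j. i < n \<Longrightarrow> j < n \<Longrightarrow> i \<noteq> r \<Longrightarrow> j \<noteq> r \<Longrightarrow> A' i j = A i j"
    and degA: "card {i. i < n \<and> A i r} \<le> D" and degA': "card {i. i < n \<and> A' i r} \<le> D"
  shows "(\<Sum>i<n. \<Sum>d\<in>UNIV. (cc f n X X' A A' r w l N i d)\<^sup>2) \<le> 4 * real D"
proof -
  let ?g = "\<lambda>k. gap_H f n X' A' w N l k"
  let ?K = "Kr f n X X' A A' r w N l"
  have cvi: "cv f n X X' A A' r w N l i = (if A' i r then ?g r else 0) - (if A i r then ?K else 0)"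
    if i: "i < n" "i \<noteq> r" for i
  proof -
    have rr: "r \<in> {..<n}" using r by simp
    have "(\<Sum>j<n. if A' i j then ?g j else 0) = (if A' i r then ?g r else 0) + (\<Sum>j\<in>{..<n}-{r}. if A' i j then ?g j else 0)"
      by (subst sum.remove[OF _ rr]) auto
    moreover have "(\<Sum>j<n. if A i j then hyb f n X X' A A' r w N l j else 0)
        = (if A i r then ?K else 0) + (\<Sum>j\<in>{..<n}-{r}. if A i j then hyb f n X X' A A' r w N l j else 0)"
      by (subst sum.remove[OF _ rr]) (auto simp: hyb_def)
    moreover have "(\<Sum>j\<in>{..<n}-{r}. if A i j then hyb f n X X' A A' r w N l j else 0)
        = (\<Sum>j\<in>{..<n}-{r}. if A' i j then ?g j else 0)"
      using AA i by (intro sum.cong) (auto simp: hyb_def)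
    ultimately show ?thesis using i unfolding cv_def by simp
  qed
  have bnd: "(norm (cv f n X X' A A' r w N l i))\<^sup>2 \<le> 2 * of_bool (A' i r) + 2 * of_bool (A i r)"
    if i: "i < n" for i
  proof (cases "i = r")
    case True then show ?thesis by (simp add: cv_def)
  next
    case False
    let ?a = "(if A' i r then ?g r else 0)" and ?b = "(if A i r then ?K else 0)"
    have na: "norm ?a \<le> of_bool (A' i r)" using norm_gap_H_le by auto
    have nb: "norm ?b \<le> of_bool (A i r)" using norm_Kr_le by auto
    have "(norm (?a - ?b))\<^sup>2 \<le> (norm ?a + norm ?b)\<^sup>2"
      by (intro power_mono norm_triangle_ineq4) auto
    also have "\<dots> \<le> 2 * (norm ?a)\<^sup>2 + 2 * (norm ?b)\<^sup>2"
      by (rule sq_sum_le)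
    also have "(norm ?a)\<^sup>2 \<le> of_bool (A' i r)"
      using na by (cases "A' i r") (auto simp: power_le_one)
    also have "(norm ?b)\<^sup>2 \<le> of_bool (A i r)"
      using nb by (cases "A i r") (auto simp: power_le_one)
    finally show ?thesis using cvi[OF i False] by simp
  qed
  have "(\<Sum>i<n. \<Sum>d\<in>UNIV. (cc f n X X' A A' r w l N i d)\<^sup>2) = (\<Sum>i<n. (norm (cv f n X X' A A' r w N l i))\<^sup>2)"
    unfolding cc_def by (simp add: sum_sq_vec)
  also have "\<dots> \<le> (\<Sum>i<n. 2 * of_bool (A' i r) + 2 * of_bool (A i r))"
    by (intro sum_mono bnd) simp
  also have "\<dots> = 2 * real (card ({..<n} \<inter> {i. A' i r})) + 2 * real (card ({..<n} \<inter> {i. A i r}))"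
    by (simp add: sum.distrib sum_distrib_left[symmetric])
  also have "{..<n} \<inter> {i. A' i r} = {i. i < n \<and> A' i r}" by auto
  also have "{..<n} \<inter> {i. A i r} = {i. i < n \<and> A i r}" by auto
  finally show ?thesis using degA degA' by simp
qed

lemma vec_meas:
  assumes "\<And>c. (\<lambda>\<omega>. g c \<omega>) \<in> borel_measurable \<Omega>"
  shows "(\<lambda>\<omega>. (\<chi> c. g c \<omega>) :: real ^ 'd::finite) \<in> borel_measurable \<Omega>"
proof (rule borel_measurable_euclidean_space[THEN iffD2], rule ballI)
  fix b :: "real ^ 'd" assume "b \<in> Basis"
  then obtain d where b: "b = axis d 1" unfolding Basis_vec_def Basis_real_def by blast
  show "(\<lambda>\<omega>. (\<chi> c. g c \<omega>) \<bullet> b) \<in> borel_measurable \<Omega>"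
    unfolding b inner_axis using assms[of d] by simp
qed

lemma vec_nth_meas: "(\<lambda>x::real ^ 'd::finite. x $ d) \<in> borel_measurable borel"
proof -
  have "(\<lambda>x::real ^ 'd. x \<bullet> axis d 1) \<in> borel_measurable borel"
    by (rule borel_measurable_inner[OF measurable_ident_sets measurable_const]) auto
  then show ?thesis by (simp add: inner_axis)
qed

lemma row_normalize_meas: "(row_normalize :: real ^ 'd::finite \<Rightarrow> _) \<in> borel_measurable borel"
proof -
  have "row_normalize = (sgn :: real ^ 'd \<Rightarrow> _)" by (simp add: fun_eq_iff row_normalize_def sgn_div_norm)
  then show ?thesis using borel_measurable_sgn by simp
qed

lemma noise_comp_meas:
  assumes "l < L" "i < n"
  shows "(\<lambda>N::nat \<Rightarrow> nat \<Rightarrow> 'd::finite \<Rightarrow> real. N l i c) \<in> borel_measurable (PiM {..<L} (\<lambda>_. MLay n s))"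
proof -
  have 1: "(\<lambda>N::nat \<Rightarrow> nat \<Rightarrow> 'd \<Rightarrow> real. N l) \<in> PiM {..<L} (\<lambda>_. MLay n s) \<rightarrow>\<^sub>M MLay n s"
    by (rule measurable_component_singleton) (use assms in simp)
  have 2: "(\<lambda>x::nat \<Rightarrow> 'd \<Rightarrow> real. x i) \<in> MLay n s \<rightarrow>\<^sub>M PiM UNIV (\<lambda>d::'d. gL s)"
    unfolding MLay_def by (rule measurable_component_singleton) (use assms in simp)
  have 3: "(\<lambda>x::'d \<Rightarrow> real. x c) \<in> borel_measurable (PiM UNIV (\<lambda>d::'d. gL s))"
    by (rule comp_gL)
  show ?thesis by (rule measurable_compose[OF measurable_compose[OF 1 2] 3])
qed

lemma step_meas:
  assumes G: "\<And>k. k < n \<Longrightarrow> (\<lambda>\<omega>. G \<omega> k) \<in> borel_measurable \<Omega>"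
    and V: "\<And>c. (\<lambda>\<omega>. V \<omega> c) \<in> borel_measurable \<Omega>"
  shows "(\<lambda>\<omega>. row_normalize ((\<Sum>k<n. if B k then G \<omega> k else 0) + (\<chi> c. V \<omega> c) :: real ^ 'd::finite))
     \<in> borel_measurable \<Omega>"
proof -
  have "(\<lambda>\<omega>. (\<Sum>k<n. if B k then G \<omega> k else 0) + (\<chi> c. V \<omega> c) :: real ^ 'd::finite) \<in> borel_measurable \<Omega>"
  proof (rule borel_measurable_add)
    show "(\<lambda>\<omega>. \<Sum>k<n. if B k then G \<omega> k else 0) \<in> borel_measurable \<Omega>"
    proof (rule borel_measurable_sum)
      fix k assume "k \<in> {..<n}"
      then show "(\<lambda>\<omega>. if B k then G \<omega> k else 0) \<in> borel_measurable \<Omega>"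
        using G[of k] by (cases "B k") auto
    qed
    show "(\<lambda>\<omega>. (\<chi> c. V \<omega> c) :: real ^ 'd) \<in> borel_measurable \<Omega>"
      by (rule vec_meas) (rule V)
  qed
  from measurable_compose[OF this row_normalize_meas] show ?thesis by (simp only: o_def)
qed

lemma gap_H_meas:
  fixes f :: "'w \<Rightarrow> 'x \<Rightarrow> real ^ 'd::finite"
  assumes W: "W \<in> \<Omega> \<rightarrow>\<^sub>M PW" and Nn: "Nn \<in> \<Omega> \<rightarrow>\<^sub>M PiM {..<L} (\<lambda>_. MLay n s)"
    and fm: "\<And>x. (\<lambda>w. f w x) \<in> borel_measurable PW" and l: "l \<le> L" and j: "j < n"
  shows "(\<lambda>\<omega>. gap_H f n X A (W \<omega>) (Nn \<omega>) l j) \<in> borel_measurable \<Omega>"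
  using l j
proof (induction l arbitrary: j)
  case 0
  show ?case using measurable_compose[OF measurable_compose[OF W fm] row_normalize_meas] by (simp only: o_def gap_H.simps)
next
  case (Suc l)
  have lL: "l < L" using Suc.prems by simp
  have nc: "(\<lambda>\<omega>. Nn \<omega> l j c) \<in> borel_measurable \<Omega>" for c
    using measurable_compose[OF Nn noise_comp_meas[OF lL Suc.prems(2), of c s]] by (simp only: o_def)
  have IH: "(\<lambda>\<omega>. gap_H f n X A (W \<omega>) (Nn \<omega>) l k) \<in> borel_measurable \<Omega>" if "k < n" for k
    using lL that by (intro Suc.IH) auto
  show ?case unfolding gap_H.simps by (rule step_meas[OF IH nc])
qed

lemma Kr_meas:
  fixes f :: "'w \<Rightarrow> 'x \<Rightarrow> real ^ 'd::finite"
  assumes W: "W \<in> \<Omega> \<rightarrow>\<^sub>M PW" and Nn: "Nn \<in> \<Omega> \<rightarrow>\<^sub>M PiM {..<L} (\<lambda>_. MLay n s)"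
    and fm: "\<And>x. (\<lambda>w. f w x) \<in> borel_measurable PW" and l: "l \<le> L" and r: "r < n"
  shows "(\<lambda>\<omega>. Kr f n X X' A A' r (W \<omega>) (Nn \<omega>) l) \<in> borel_measurable \<Omega>"
proof (cases l)
  case 0
  show ?thesis using measurable_compose[OF measurable_compose[OF W fm] row_normalize_meas] unfolding 0 by (simp only: o_def Kr.simps)
next
  case (Suc m)
  have mL: "m < L" using Suc l by simp
  have nc: "(\<lambda>\<omega>. Nn \<omega> m r c) \<in> borel_measurable \<Omega>" for c
    using measurable_compose[OF Nn noise_comp_meas[OF mL r, of c s]] by (simp only: o_def)
  have G: "(\<lambda>\<omega>. gap_H f n X' A' (W \<omega>) (Nn \<omega>) m k) \<in> borel_measurable \<Omega>" if "k < n" for k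
    by (rule gap_H_meas[where f=f, OF W Nn fm]) (use mL that in auto)
  show ?thesis unfolding Suc Kr.simps by (rule step_meas[OF G nc])
qed

lemma cc_apply: "cc f n X X' A A' r w l N i d = cv f n X X' A A' r w N l i $ d"
  by (simp add: cc_def)


lemma cc_meas:
  fixes f :: "'w \<Rightarrow> 'x \<Rightarrow> real ^ 'd::finite"
  assumes W: "W \<in> \<Omega> \<rightarrow>\<^sub>M PW" and Nn: "Nn \<in> \<Omega> \<rightarrow>\<^sub>M PiM {..<L} (\<lambda>_. MLay n s)"
    and fm: "\<And>x. (\<lambda>w. f w x) \<in> borel_measurable PW" and l: "l \<le> L" and r: "r < n"
  shows "(\<lambda>\<omega>. cc f n X X' A A' r (W \<omega>) l (Nn \<omega>) i d) \<in> borel_measurable \<Omega>"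
proof -
  have G: "(\<lambda>\<omega>. gap_H f n X' A' (W \<omega>) (Nn \<omega>) l k) \<in> borel_measurable \<Omega>" if "k < n" for k
    by (rule gap_H_meas[where f=f, OF W Nn fm l that])
  have K: "(\<lambda>\<omega>. Kr f n X X' A A' r (W \<omega>) (Nn \<omega>) l) \<in> borel_measurable \<Omega>"
    by (rule Kr_meas[where f=f, OF W Nn fm l r])
  have S1: "(\<lambda>\<omega>. \<Sum>j<n. if A' i j then gap_H f n X' A' (W \<omega>) (Nn \<omega>) l j else 0) \<in> borel_measurable \<Omega>"
  proof (rule borel_measurable_sum)
    fix j assume "j \<in> {..<n}"
    then show "(\<lambda>\<omega>. if A' i j then gap_H f n X' A' (W \<omega>) (Nn \<omega>) l j else 0) \<in> borel_measurable \<Omega>"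
      using G[of j] by (cases "A' i j") auto
  qed
  have S2: "(\<lambda>\<omega>. \<Sum>j<n. if A i j then hyb f n X X' A A' r (W \<omega>) (Nn \<omega>) l j else 0) \<in> borel_measurable \<Omega>"
  proof (rule borel_measurable_sum)
    fix j assume "j \<in> {..<n}"
    then show "(\<lambda>\<omega>. if A i j then hyb f n X X' A A' r (W \<omega>) (Nn \<omega>) l j else 0) \<in> borel_measurable \<Omega>"
      using G[of j] K by (cases "A i j"; cases "j = r") (auto simp: hyb_def)
  qed
  have "(\<lambda>\<omega>. cv f n X X' A A' r (W \<omega>) (Nn \<omega>) l i) \<in> borel_measurable \<Omega>"
  proof (cases "i = r")
    case True then show ?thesis by (simp add: cv_def)
  next
    case False
    then show ?thesis unfolding cv_def using borel_measurable_diff[OF S1 S2] by simp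
  qed
  from measurable_compose[OF this vec_nth_meas[of d]]
  show ?thesis unfolding cc_apply by (simp only: o_def)
qed

lemma renyi_I_pos:
  assumes P: "prob_space P" and Q: "prob_space Q" and setsPQ: "sets P = sets Q"
    and ac: "absolutely_continuous Q P" and \<alpha>: "\<alpha> > 0"
  shows "(\<integral>\<^sup>+x. ennreal (enn2real (RN_deriv Q P x) powr \<alpha>) \<partial>Q) \<noteq> 0"
proof
  interpret Q: prob_space Q by (rule Q)
  interpret P: prob_space P by (rule P)
  let ?h = "RN_deriv Q P"
  have hP: "density Q ?h = P" using Q.density_RN_deriv[OF ac setsPQ] .
  assume "(\<integral>\<^sup>+x. ennreal (enn2real (RN_deriv Q P x) powr \<alpha>) \<partial>Q) = 0"
  then have "AE y in Q. ennreal (enn2real (?h y) powr \<alpha>) = 0" by (simp add: nn_integral_0_iff_AE)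
  moreover have "AE y in Q. ?h y \<noteq> \<infinity>"
    by (rule Q.RN_deriv_finite[OF _ ac setsPQ]) (simp add: P.sigma_finite_measure)
  ultimately have "AE y in Q. ?h y = 0"
    by eventually_elim (auto simp: enn2real_eq_0_iff)
  then have "(\<integral>\<^sup>+y. ?h y \<partial>Q) = 0" by (simp add: nn_integral_0_iff_AE)
  moreover have "(\<integral>\<^sup>+y. ?h y \<partial>Q) = emeasure P (space P)"
  proof -
    have "emeasure P (space P) = emeasure (density Q ?h) (space Q)"
      using sets_eq_imp_space_eq[OF setsPQ] hP by simp
    also have "\<dots> = (\<integral>\<^sup>+y. ?h y \<partial>Q)"
      by (subst emeasure_density) (auto intro!: nn_integral_cong)
    finally show ?thesis by simp
  qed
  ultimately show False using P.emeasure_space_1 by simp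
qed

lemma qL_meas:
  assumes a: "\<And>i d. i < n \<Longrightarrow> (\<lambda>\<omega>. a \<omega> i d) \<in> borel_measurable \<Omega>"
    and b: "\<And>i d. i < n \<Longrightarrow> (\<lambda>\<omega>. b \<omega> i d) \<in> borel_measurable \<Omega>"
  shows "(\<lambda>\<omega>. qL s n (b \<omega>) (a \<omega> :: nat \<Rightarrow> 'd::finite \<Rightarrow> real)) \<in> borel_measurable \<Omega>"
  unfolding qL_def
proof (rule borel_measurable_prod)
  fix i assume i: "i \<in> {..<n}"
  show "(\<lambda>\<omega>. \<Prod>d\<in>UNIV. gratio s (a \<omega> i d) (b \<omega> i d)) \<in> borel_measurable \<Omega>"
  proof (rule borel_measurable_prod)
    fix d :: 'd
    have ad: "(\<lambda>\<omega>. a \<omega> i d) \<in> borel_measurable \<Omega>" and bd: "(\<lambda>\<omega>. b \<omega> i d) \<in> borel_measurable \<Omega>"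
      using a b i by auto
    have 1: "(\<lambda>\<omega>. normal_density 0 s (a \<omega> i d + b \<omega> i d)) \<in> borel_measurable \<Omega>"
      using measurable_compose[OF borel_measurable_add[OF ad bd] borel_measurable_normal_density] by (simp only: o_def)
    have 2: "(\<lambda>\<omega>. normal_density 0 s (a \<omega> i d)) \<in> borel_measurable \<Omega>"
      using measurable_compose[OF ad borel_measurable_normal_density] by (simp only: o_def)
    show "(\<lambda>\<omega>. gratio s (a \<omega> i d) (b \<omega> i d)) \<in> borel_measurable \<Omega>"
      unfolding gratio_def by (rule borel_measurable_divide[OF 1 2])
  qed
qed

theorem theorem1:
  fixes f :: "'w \<Rightarrow> real ^ 'f \<Rightarrow> real ^ 'd::finite"
    and PW PW' :: "'w measure"
    and X X' :: "nat \<Rightarrow> real ^ 'f"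
    and Y Y' :: "nat \<Rightarrow> nat"
    and A A' :: "nat \<Rightarrow> nat \<Rightarrow> bool"
    and n m C r k L D :: nat
    and \<alpha> s \<gamma>\<^sub>1 :: real
  assumes "\<alpha> > 1" and "s > 0" and "L \<ge> 1" and "D \<ge> 1"
    and adj: "node_adjacent n m C r X Y A X' Y' A' \<or> k_neighbor_adjacent k n m C r X Y A X' Y' A'"
    and deg: "max_out_degree_le n A D" "max_out_degree_le n A' D"
    and PW: "prob_space PW" "prob_space PW'" "sets PW' = sets PW"
    and f_meas: "\<And>x. (\<lambda>w. f w x) \<in> PW \<rightarrow>\<^sub>M borel"
    and W_div: "renyi_divergence \<alpha> PW PW' \<le> ereal \<gamma>\<^sub>1"
  shows "renyi_divergence \<alpha> (gap_Z_minus_dist f n L s r X A PW) (gap_Z_minus_dist f n L s r X' A' PW')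
           \<le> ereal (\<gamma>\<^sub>1 + 4 * real D * real L * \<alpha> / (2 * s\<^sup>2))"
proof -
  have \<alpha>: "\<alpha> > 1" and s: "s > 0" using assms(1,2) .
  have na: "node_adjacent n m C r X Y A X' Y' A'"
    using adj unfolding k_neighbor_adjacent_def by blast
  have r: "r < n" using na unfolding node_adjacent_def by blast
  have noloop: "\<And>i. \<not> A i i" using na unfolding node_adjacent_def valid_dataset_def by blast
  have XX: "\<And>j. j < n \<Longrightarrow> j \<noteq> r \<Longrightarrow> X' j = X j" using na unfolding node_adjacent_def by auto
  have AA: "\<And>i j. i < n \<Longrightarrow> j < n \<Longrightarrow> i \<noteq> r \<Longrightarrow> j \<noteq> r \<Longrightarrow> A' i j = A i j"
    using na unfolding node_adjacent_def by auto
  have degA: "card {i. i < n \<and> A i r} \<le> D" using deg(1) r unfolding max_out_degree_le_def by auto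
  have degA': "card {i. i < n \<and> A' i r} \<le> D" using deg(2) r unfolding max_out_degree_le_def by auto
  interpret PW: prob_space PW by (rule PW(1))
  interpret PW': prob_space PW' by (rule PW(2))
  have setsW: "sets PW = sets PW'" using PW(3) by simp
  have fm: "\<And>x. (\<lambda>w. f w x) \<in> borel_measurable PW" using f_meas .
  have fm': "\<And>x. (\<lambda>w. f w x) \<in> borel_measurable PW'" using f_meas by (simp cong: measurable_cong_sets[OF setsW refl])
  define IW where "IW = (\<integral>\<^sup>+x. ennreal (enn2real (RN_deriv PW' PW x) powr \<alpha>) \<partial>PW')"
  have Wcond: "sets PW = sets PW' \<and> absolutely_continuous PW' PW"
  proof (rule ccontr)
    assume "\<not> ?thesis"
    then have "renyi_divergence \<alpha> PW PW' = \<infinity>" unfolding renyi_divergence_def by (subst if_not_P) auto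
    then show False using W_div by simp
  qed
  then have acW: "absolutely_continuous PW' PW" by simp
  have IW_top: "IW \<noteq> \<infinity>"
  proof
    assume "IW = \<infinity>"
    then have "renyi_divergence \<alpha> PW PW' = \<infinity>" using Wcond unfolding renyi_divergence_def IW_def by (simp add: Let_def)
    then show False using W_div by simp
  qed
  have IW_le: "ln (enn2real IW) / (\<alpha> - 1) \<le> \<gamma>\<^sub>1"
    using W_div Wcond IW_top unfolding renyi_divergence_def IW_def by (simp add: Let_def)
  have IW_pos: "enn2real IW > 0"
  proof -
    have "IW \<noteq> 0" unfolding IW_def using renyi_I_pos[OF PW(1,2) setsW acW] \<alpha> by simp
    then show ?thesis using IW_top by (simp add: enn2real_positive_iff zero_less_iff_neq_zero top.not_eq_extremum)
  qed
  define \<nu> where "\<nu> = PiM {..<L} (\<lambda>_. MLay n s :: (nat \<Rightarrow> 'd \<Rightarrow> real) measure)"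
  have gn: "gap_noise n L s = \<nu>" unfolding \<nu>_def gap_noise_def MLay_def gL_def ..
  interpret \<nu>: prob_space \<nu> unfolding \<nu>_def by (intro prob_space_PiM prob_MLay s)
  interpret P1: pair_sigma_finite PW \<nu> by (intro pair_sigma_finite.intro PW.sigma_finite_measure \<nu>.sigma_finite_measure)
  interpret P2: pair_sigma_finite PW' \<nu> by (intro pair_sigma_finite.intro PW'.sigma_finite_measure \<nu>.sigma_finite_measure)
  define Nout where "Nout = PiM ({..<n} - {r}) (\<lambda>i. PiM {..L} (\<lambda>l. borel :: (real ^ 'd) measure))"
  define G where "G = (\<lambda>(w, N). \<lambda>i\<in>{..<n} - {r}. \<lambda>l\<in>{..L}. gap_H f n X A w N l i)"
  define G' where "G' = (\<lambda>(w, N). \<lambda>i\<in>{..<n} - {r}. \<lambda>l\<in>{..L}. gap_H f n X' A' w N l i)"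
  have lhs: "gap_Z_minus_dist f n L s r X A PW = distr (PW \<Otimes>\<^sub>M \<nu>) Nout G"
    unfolding gap_Z_minus_dist_def gn Nout_def G_def ..
  have rhs: "gap_Z_minus_dist f n L s r X' A' PW' = distr (PW' \<Otimes>\<^sub>M \<nu>) Nout G'"
    unfolding gap_Z_minus_dist_def gn Nout_def G'_def ..
  define cw where "cw w l N = cc f n X X' A A' r w l N" for w l N
  define \<rho>w where "\<rho>w w N = (\<Prod>l<L. qL s n (cw w l N) (N l))" for w N
  define \<pi> where "\<pi> w = enn2real (RN_deriv PW' PW w)" for w
  define \<rho> where "\<rho> z = \<pi> (fst z) * \<rho>w (fst z) (snd z)" for z
  have \<rho>w_nn: "\<rho>w w N \<ge> 0" for w N unfolding \<rho>w_def by (intro prod_nonneg qL_nonneg s)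
  have \<rho>_nn: "\<rho> z \<ge> 0" for z unfolding \<rho>_def \<pi>_def using \<rho>w_nn by simp
  have sndm: "snd \<in> M \<Otimes>\<^sub>M \<nu> \<rightarrow>\<^sub>M PiM {..<L} (\<lambda>_. MLay n s)" for M :: "'w measure"
    using measurable_snd[of M \<nu>] by (simp add: \<nu>_def)
  have Geq: "G = (\<lambda>z. \<lambda>i\<in>{..<n} - {r}. \<lambda>l\<in>{..L}. gap_H f n X A (fst z) (snd z) l i)"
    unfolding G_def by (simp add: fun_eq_iff split_beta)
  have G'eq: "G' = (\<lambda>z. \<lambda>i\<in>{..<n} - {r}. \<lambda>l\<in>{..L}. gap_H f n X' A' (fst z) (snd z) l i)"
    unfolding G'_def by (simp add: fun_eq_iff split_beta)
  have Gm: "G \<in> PW \<Otimes>\<^sub>M \<nu> \<rightarrow>\<^sub>M Nout"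
    unfolding Geq Nout_def
  proof (intro measurable_restrict)
    fix i l assume "i \<in> {..<n} - {r}" "l \<in> {..L}"
    then show "(\<lambda>z. gap_H f n X A (fst z) (snd z) l i) \<in> borel_measurable (PW \<Otimes>\<^sub>M \<nu>)"
      by (intro gap_H_meas[where f=f, OF measurable_fst sndm fm]) auto
  qed
  have G'm: "G' \<in> PW' \<Otimes>\<^sub>M \<nu> \<rightarrow>\<^sub>M Nout"
    unfolding G'eq Nout_def
  proof (intro measurable_restrict)
    fix i l assume "i \<in> {..<n} - {r}" "l \<in> {..L}"
    then show "(\<lambda>z. gap_H f n X' A' (fst z) (snd z) l i) \<in> borel_measurable (PW' \<Otimes>\<^sub>M \<nu>)"
      by (intro gap_H_meas[where f=f, OF measurable_fst sndm fm']) auto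
  qed
  have \<rho>wm: "(\<lambda>z. \<rho>w (fst z) (snd z)) \<in> borel_measurable (PW' \<Otimes>\<^sub>M \<nu>)"
    unfolding \<rho>w_def
  proof (rule borel_measurable_prod)
    fix l assume l: "l \<in> {..<L}"
    show "(\<lambda>z. qL s n (cw (fst z) l (snd z)) (snd z l)) \<in> borel_measurable (PW' \<Otimes>\<^sub>M \<nu>)"
    proof (rule qL_meas)
      fix i d assume i: "i < n"
      show "(\<lambda>z. snd z l i d) \<in> borel_measurable (PW' \<Otimes>\<^sub>M \<nu>)"
        using measurable_compose[OF sndm noise_comp_meas[of l L i n d s]] l i by (simp add: o_def)
      show "(\<lambda>z. cw (fst z) l (snd z) i d) \<in> borel_measurable (PW' \<Otimes>\<^sub>M \<nu>)"
        unfolding cw_def using l r by (intro cc_meas[where f=f, OF measurable_fst sndm fm']) auto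
    qed
  qed
  have \<pi>m: "\<pi> \<in> borel_measurable PW'" unfolding \<pi>_def by simp
  have \<rho>m: "\<rho> \<in> borel_measurable (PW' \<Otimes>\<^sub>M \<nu>)"
    unfolding \<rho>_def using measurable_compose[OF measurable_fst \<pi>m] \<rho>wm
    by (intro borel_measurable_times) (auto simp: o_def)
  have spW: "space PW' = space PW" using sets_eq_imp_space_eq[OF PW(3)] .
  have mq: "(\<lambda>N. qL s n (cw w l N) (N l)) \<in> borel_measurable (PiM {..<L'} (\<lambda>_. MLay n s))"
    if w: "w \<in> space PW" and l: "l < L'" for w l L'
  proof (rule qL_meas)
    fix i d assume i: "i < n"
    show "(\<lambda>N. N l i d) \<in> borel_measurable (PiM {..<L'} (\<lambda>_. MLay n s :: (nat \<Rightarrow> 'd \<Rightarrow> real) measure))"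
      by (rule noise_comp_meas[OF l i])
    show "(\<lambda>N. cw w l N i d) \<in> borel_measurable (PiM {..<L'} (\<lambda>_. MLay n s))"
      unfolding cw_def using l r
      by (intro cc_meas[where f=f and L=L', OF measurable_const[OF w] measurable_ident_sets[OF refl] fm]) auto
  qed
  have mp: "(\<lambda>N. pL n (N l) (cw w l N)) \<in> PiM {..<L'} (\<lambda>_. MLay n s) \<rightarrow>\<^sub>M MLay n s"
    if w: "w \<in> space PW" and l: "l < L'" for w l L'
  proof -
    have "(\<lambda>N. pL n (N l) (cw w l N)) \<in> PiM {..<L'} (\<lambda>_. MLay n s) \<rightarrow>\<^sub>M PiM {..<n} (\<lambda>i. PiM UNIV (\<lambda>d::'d. gL s))"
      unfolding pL_def
    proof (intro measurable_restrict)
      fix i d assume i: "i \<in> {..<n}"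
      have 1: "(\<lambda>N. N l i d) \<in> borel_measurable (PiM {..<L'} (\<lambda>_. MLay n s :: (nat \<Rightarrow> 'd \<Rightarrow> real) measure))"
        using i by (intro noise_comp_meas[OF l]) auto
      have 2: "(\<lambda>N. cw w l N i d) \<in> borel_measurable (PiM {..<L'} (\<lambda>_. MLay n s))"
        unfolding cw_def using l r
        by (intro cc_meas[where f=f and L=L', OF measurable_const[OF w] measurable_ident_sets[OF refl] fm]) auto
      show "(\<lambda>N. N l i d + cw w l N i d) \<in> PiM {..<L'} (\<lambda>_. MLay n s) \<rightarrow>\<^sub>M gL s"
        using borel_measurable_add[OF 1 2] by (simp add: measurable_cong_sets[OF refl sets_gL])
    qed
    then show ?thesis by (simp only: MLay_def)
  qed
  have LS: "(\<integral>\<^sup>+N. H (\<lambda>l\<in>{..<L}. pL n (N l) (cw w l N)) * ennreal (\<rho>w w N) \<partial>\<nu>) = integral\<^sup>N \<nu> H"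
    if w: "w \<in> space PW" and H: "H \<in> borel_measurable \<nu>" for w H
    unfolding \<rho>w_def \<nu>_def
  proof (rule layers_shift[of "MLay n s" "pL n" "qL s n" "cw w"])
    show "sigma_finite_measure (MLay n s :: (nat \<Rightarrow> 'd \<Rightarrow> real) measure)"
      by (rule prob_space_imp_sigma_finite[OF prob_MLay[OF s]])
    show "(\<integral>\<^sup>+x. H' (pL n x b) * ennreal (qL s n b x) \<partial>MLay n s) = integral\<^sup>N (MLay n s) H'"
      if "H' \<in> borel_measurable (MLay n s :: (nat \<Rightarrow> 'd \<Rightarrow> real) measure)" for b H'
      by (rule layer_TP[OF s that])
    show "qL s n b x \<ge> 0" for b x by (rule qL_nonneg[OF s])
    show "cw w l N = cw w l N'" if "\<And>k. k < l \<Longrightarrow> N k = N' k" for l N N'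
      unfolding cw_def by (rule cc_dep) (use that in auto)
    show "(\<lambda>N. pL n (N l) (cw w l N)) \<in> PiM {..<L'} (\<lambda>_. MLay n s) \<rightarrow>\<^sub>M MLay n s" if "l < L'" for L' l
      by (rule mp[OF w that])
    show "(\<lambda>N. qL s n (cw w l N) (N l)) \<in> borel_measurable (PiM {..<L'} (\<lambda>_. MLay n s))" if "l < L'" for L' l
      by (rule mq[OF w that])
    show "H \<in> borel_measurable (PiM {..<L} (\<lambda>_. MLay n s))" using H unfolding \<nu>_def .
  qed
  have ident: "G (w, \<lambda>l\<in>{..<L}. pL n (N l) (cw w l N)) = G' (w, N)" for w N
  proof -
    have hy: "gap_H f n X A w (\<lambda>l\<in>{..<L}. pL n (N l) (cw w l N)) l i = hyb f n X X' A A' r w N l i"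
      if "l \<le> L" "i < n" for l i
      by (rule hyb_eq[OF noloop XX _ that]) (auto simp: pL_def cw_def restrict_def)
    show ?thesis unfolding G_def G'_def by (auto simp: hy hyb_def split: if_splits intro!: restrict_ext)
  qed
  have G'md: "G' \<in> density (PW' \<Otimes>\<^sub>M \<nu>) (\<lambda>z. ennreal (\<rho> z)) \<rightarrow>\<^sub>M Nout"
    using G'm by (simp add: measurable_cong_sets[OF sets_density refl])
  have msets: "measurable (PW \<Otimes>\<^sub>M \<nu>) (borel :: ennreal measure) = measurable (PW' \<Otimes>\<^sub>M \<nu>) borel"
    by (rule measurable_cong_sets[OF sets_pair_measure_cong[OF setsW refl] refl])
  have EQ: "distr (PW \<Otimes>\<^sub>M \<nu>) Nout G = distr (density (PW' \<Otimes>\<^sub>M \<nu>) (\<lambda>z. ennreal (\<rho> z))) Nout G'"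
  proof (rule measure_eqI)
    show "sets (distr (PW \<Otimes>\<^sub>M \<nu>) Nout G) = sets (distr (density (PW' \<Otimes>\<^sub>M \<nu>) (\<lambda>z. ennreal (\<rho> z))) Nout G')"
      by simp
    fix A assume "A \<in> sets (distr (PW \<Otimes>\<^sub>M \<nu>) Nout G)"
    then have A: "A \<in> sets Nout" by simp
    have F: "indicator A \<in> borel_measurable Nout" using A by simp
    have FG: "(\<lambda>z. indicator A (G z) :: ennreal) \<in> borel_measurable (PW \<Otimes>\<^sub>M \<nu>)"
      using measurable_compose[OF Gm F] by (simp add: o_def)
    have FGb: "(\<lambda>z. indicator A (G z) :: ennreal) \<in> borel_measurable (PW' \<Otimes>\<^sub>M \<nu>)"
      using FG msets by simp
    have FG': "(\<lambda>z. indicator A (G' z) :: ennreal) \<in> borel_measurable (PW' \<Otimes>\<^sub>M \<nu>)"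
      using measurable_compose[OF G'm F] by (simp add: o_def)
    have FG'\<rho>: "(\<lambda>z. ennreal (\<rho> z) * indicator A (G' z)) \<in> borel_measurable (PW' \<Otimes>\<^sub>M \<nu>)"
      using \<rho>m FG' by (intro borel_measurable_times_ennreal) auto
    have FG'\<rho>w: "(\<lambda>z. indicator A (G' z) * ennreal (\<rho>w (fst z) (snd z))) \<in> borel_measurable (PW' \<Otimes>\<^sub>M \<nu>)"
      using \<rho>wm FG' by (intro borel_measurable_times_ennreal) auto
    have "emeasure (distr (PW \<Otimes>\<^sub>M \<nu>) Nout G) A = (\<integral>\<^sup>+x. indicator A x \<partial>distr (PW \<Otimes>\<^sub>M \<nu>) Nout G)"
      by (rule nn_integral_indicator[symmetric]) (simp add: A)
    also have "\<dots> = (\<integral>\<^sup>+z. indicator A (G z) \<partial>(PW \<Otimes>\<^sub>M \<nu>))"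
      by (rule nn_integral_distr[OF Gm]) (use F in simp)
    also have "\<dots> = (\<integral>\<^sup>+w. \<integral>\<^sup>+N. indicator A (G (w, N)) \<partial>\<nu> \<partial>PW)"
      by (rule \<nu>.nn_integral_fst[symmetric, OF FG])
    also have "\<dots> = (\<integral>\<^sup>+w. \<integral>\<^sup>+N. indicator A (G (w, N)) \<partial>\<nu> \<partial>density PW' (RN_deriv PW' PW))"
      using PW'.density_RN_deriv[OF acW setsW] by simp
    also have "\<dots> = (\<integral>\<^sup>+w. RN_deriv PW' PW w * (\<integral>\<^sup>+N. indicator A (G (w, N)) \<partial>\<nu>) \<partial>PW')"
      by (rule nn_integral_density) (simp_all add: \<nu>.borel_measurable_nn_integral_fst[OF FGb])
    also have "\<dots> = (\<integral>\<^sup>+w. ennreal (\<pi> w) * (\<integral>\<^sup>+N. indicator A (G' (w, N)) * ennreal (\<rho>w w N) \<partial>\<nu>) \<partial>PW')"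
    proof (rule nn_integral_cong_AE)
      have fin: "AE w in PW'. RN_deriv PW' PW w \<noteq> \<infinity>"
        by (rule PW'.RN_deriv_finite[OF PW.sigma_finite_measure acW setsW])
      from fin AE_space[of PW']
      show "AE w in PW'. RN_deriv PW' PW w * (\<integral>\<^sup>+N. indicator A (G (w, N)) \<partial>\<nu>)
          = ennreal (\<pi> w) * (\<integral>\<^sup>+N. indicator A (G' (w, N)) * ennreal (\<rho>w w N) \<partial>\<nu>)"
      proof eventually_elim
        case (elim w)
        then have w: "w \<in> space PW" using spW by simp
        have Hm: "(\<lambda>N. indicator A (G (w, N)) :: ennreal) \<in> borel_measurable \<nu>"
          using measurable_compose[OF measurable_Pair1'[OF w] FG] by (simp add: o_def)
        have "(\<integral>\<^sup>+N. indicator A (G (w, N)) \<partial>\<nu>)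
            = (\<integral>\<^sup>+N. indicator A (G (w, \<lambda>l\<in>{..<L}. pL n (N l) (cw w l N))) * ennreal (\<rho>w w N) \<partial>\<nu>)"
          using LS[OF w Hm] by simp
        also have "\<dots> = (\<integral>\<^sup>+N. indicator A (G' (w, N)) * ennreal (\<rho>w w N) \<partial>\<nu>)"
          by (simp only: ident)
        finally show ?case using elim(1) unfolding \<pi>_def by (simp add: ennreal_enn2real_if)
      qed
    qed
    also have "\<dots> = (\<integral>\<^sup>+w. \<integral>\<^sup>+N. ennreal (\<rho> (w, N)) * indicator A (G' (w, N)) \<partial>\<nu> \<partial>PW')"
    proof (rule nn_integral_cong)
      fix w assume w: "w \<in> space PW'"
      have m: "(\<lambda>N. indicator A (G' (w, N)) * ennreal (\<rho>w w N)) \<in> borel_measurable \<nu>"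
        using measurable_compose[OF measurable_Pair1'[OF w] FG'\<rho>w] by (simp add: o_def)
      have "ennreal (\<pi> w) * (\<integral>\<^sup>+N. indicator A (G' (w, N)) * ennreal (\<rho>w w N) \<partial>\<nu>)
          = (\<integral>\<^sup>+N. ennreal (\<pi> w) * (indicator A (G' (w, N)) * ennreal (\<rho>w w N)) \<partial>\<nu>)"
        by (rule nn_integral_cmult[OF m, symmetric])
      also have "\<dots> = (\<integral>\<^sup>+N. ennreal (\<rho> (w, N)) * indicator A (G' (w, N)) \<partial>\<nu>)"
        unfolding \<rho>_def \<pi>_def using \<rho>w_nn by (intro nn_integral_cong) (simp add: ennreal_mult mult_ac)
      finally show "ennreal (\<pi> w) * (\<integral>\<^sup>+N. indicator A (G' (w, N)) * ennreal (\<rho>w w N) \<partial>\<nu>)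
          = (\<integral>\<^sup>+N. ennreal (\<rho> (w, N)) * indicator A (G' (w, N)) \<partial>\<nu>)" .
    qed
    also have "\<dots> = (\<integral>\<^sup>+z. ennreal (\<rho> z) * indicator A (G' z) \<partial>(PW' \<Otimes>\<^sub>M \<nu>))"
      by (rule \<nu>.nn_integral_fst[OF FG'\<rho>])
    also have "\<dots> = (\<integral>\<^sup>+z. indicator A (G' z) \<partial>density (PW' \<Otimes>\<^sub>M \<nu>) (\<lambda>z. ennreal (\<rho> z)))"
      by (rule nn_integral_density[symmetric]) (use \<rho>m FG' in auto)
    also have "\<dots> = (\<integral>\<^sup>+x. indicator A x \<partial>distr (density (PW' \<Otimes>\<^sub>M \<nu>) (\<lambda>z. ennreal (\<rho> z))) Nout G')"
      by (rule nn_integral_distr[OF G'md, symmetric]) (use F in simp)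
    also have "\<dots> = emeasure (distr (density (PW' \<Otimes>\<^sub>M \<nu>) (\<lambda>z. ennreal (\<rho> z))) Nout G') A"
      by (rule nn_integral_indicator) (simp add: A)
    finally show "emeasure (distr (PW \<Otimes>\<^sub>M \<nu>) Nout G) A = emeasure (distr (density (PW' \<Otimes>\<^sub>M \<nu>) (\<lambda>z. ennreal (\<rho> z))) Nout G') A" .
  qed
  define B where "B = enn2real IW * exp (real L * (\<alpha> * (\<alpha> - 1) * (4 * real D) / (2 * s\<^sup>2)))"
  define E where "E = ennreal (exp (\<alpha> * (\<alpha> - 1) * (4 * real D) / (2 * s\<^sup>2)))"
  have Bnd: "(\<integral>\<^sup>+y. ennreal (qL s n (cw w l N) y powr \<alpha>) \<partial>MLay n s) \<le> E" for w l N
  proof -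
    let ?c = "cw w l N"
    have eq: "(\<Sum>i<n. \<Sum>d\<in>UNIV. \<alpha> * (\<alpha> - 1) * (?c i d)\<^sup>2 / (2 * s\<^sup>2))
        = \<alpha> * (\<alpha> - 1) / (2 * s\<^sup>2) * (\<Sum>i<n. \<Sum>d\<in>UNIV. (?c i d)\<^sup>2)"
      by (simp add: sum_distrib_left)
    have cb: "(\<Sum>i<n. \<Sum>d\<in>UNIV. (?c i d)\<^sup>2) \<le> 4 * real D"
      unfolding cw_def by (rule cc_bound[where A=A and A'=A', OF r AA degA degA'])
    have "\<alpha> * (\<alpha> - 1) / (2 * s\<^sup>2) * (\<Sum>i<n. \<Sum>d\<in>UNIV. (?c i d)\<^sup>2) \<le> \<alpha> * (\<alpha> - 1) / (2 * s\<^sup>2) * (4 * real D)"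
      using \<alpha> by (intro mult_left_mono cb) auto
    then have "(\<Sum>i<n. \<Sum>d\<in>UNIV. \<alpha> * (\<alpha> - 1) * (?c i d)\<^sup>2 / (2 * s\<^sup>2)) \<le> \<alpha> * (\<alpha> - 1) * (4 * real D) / (2 * s\<^sup>2)"
      unfolding eq by simp
    then show ?thesis unfolding E_def layer_moment[OF s] by (intro ennreal_leI) simp
  qed
  have LM: "(\<integral>\<^sup>+N. ennreal (\<rho>w w N powr \<alpha>) \<partial>\<nu>) \<le> E ^ L" if w: "w \<in> space PW" for w
    unfolding \<rho>w_def \<nu>_def
  proof (rule layers_moment[of "MLay n s" "qL s n" "cw w" \<alpha> E])
    show "sigma_finite_measure (MLay n s :: (nat \<Rightarrow> 'd \<Rightarrow> real) measure)"
      by (rule prob_space_imp_sigma_finite[OF prob_MLay[OF s]])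
    show "qL s n b x \<ge> 0" for b x by (rule qL_nonneg[OF s])
    show "cw w l N = cw w l N'" if "\<And>k. k < l \<Longrightarrow> N k = N' k" for l N N'
      unfolding cw_def by (rule cc_dep) (use that in auto)
    show "(\<lambda>N. qL s n (cw w l N) (N l)) \<in> borel_measurable (PiM {..<L'} (\<lambda>_. MLay n s))" if "l < L'" for L' l
      by (rule mq[OF w that])
    show "(\<integral>\<^sup>+y. ennreal (qL s n (cw w l N) y powr \<alpha>) \<partial>MLay n s) \<le> E" for l N
      by (rule Bnd)
  qed
  have \<rho>pm: "(\<lambda>z. ennreal (\<rho> z powr \<alpha>)) \<in> borel_measurable (PW' \<Otimes>\<^sub>M \<nu>)"
    using \<rho>m by measurable
  have MB: "(\<integral>\<^sup>+z. ennreal (\<rho> z powr \<alpha>) \<partial>(PW' \<Otimes>\<^sub>M \<nu>)) \<le> ennreal B"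
  proof -
    have "(\<integral>\<^sup>+z. ennreal (\<rho> z powr \<alpha>) \<partial>(PW' \<Otimes>\<^sub>M \<nu>)) = (\<integral>\<^sup>+w. \<integral>\<^sup>+N. ennreal (\<rho> (w, N) powr \<alpha>) \<partial>\<nu> \<partial>PW')"
      by (rule \<nu>.nn_integral_fst[symmetric, OF \<rho>pm])
    also have "\<dots> \<le> (\<integral>\<^sup>+w. ennreal (\<pi> w powr \<alpha>) * E ^ L \<partial>PW')"
    proof (rule nn_integral_mono)
      fix w assume w': "w \<in> space PW'"
      then have w: "w \<in> space PW" using spW by simp
      have m: "(\<lambda>N. ennreal (\<rho>w w N powr \<alpha>)) \<in> borel_measurable \<nu>"
      proof -
        have "(\<lambda>z. ennreal (\<rho>w (fst z) (snd z) powr \<alpha>)) \<in> borel_measurable (PW' \<Otimes>\<^sub>M \<nu>)"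
          using \<rho>wm by measurable
        from measurable_compose[OF measurable_Pair1'[OF w'] this] show ?thesis by (simp add: o_def)
      qed
      have "(\<integral>\<^sup>+N. ennreal (\<rho> (w, N) powr \<alpha>) \<partial>\<nu>) = (\<integral>\<^sup>+N. ennreal (\<pi> w powr \<alpha>) * ennreal (\<rho>w w N powr \<alpha>) \<partial>\<nu>)"
        unfolding \<rho>_def \<pi>_def using \<rho>w_nn by (intro nn_integral_cong) (simp add: powr_mult ennreal_mult)
      also have "\<dots> = ennreal (\<pi> w powr \<alpha>) * (\<integral>\<^sup>+N. ennreal (\<rho>w w N powr \<alpha>) \<partial>\<nu>)"
        by (rule nn_integral_cmult[OF m])
      also have "\<dots> \<le> ennreal (\<pi> w powr \<alpha>) * E ^ L"
        by (intro mult_left_mono LM[OF w]) simp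
      finally show "(\<integral>\<^sup>+N. ennreal (\<rho> (w, N) powr \<alpha>) \<partial>\<nu>) \<le> ennreal (\<pi> w powr \<alpha>) * E ^ L" .
    qed
    also have "\<dots> = IW * E ^ L"
      unfolding IW_def \<pi>_def by (rule nn_integral_multc) simp
    also have "\<dots> = ennreal B"
    proof -
      have i1: "IW = ennreal (enn2real IW)" using IW_top by (simp add: ennreal_enn2real_if)
      have i2: "E ^ L = ennreal (exp (real L * (\<alpha> * (\<alpha> - 1) * (4 * real D) / (2 * s\<^sup>2))))"
        unfolding E_def
        by (subst ennreal_power) (simp_all only: exp_of_nat_mult[symmetric] exp_ge_zero less_imp_le exp_gt_zero)
      show ?thesis unfolding B_def i2 by (subst i1) (rule ennreal_mult'[symmetric], simp)
    qed
    finally show ?thesis .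
  qed
  have main: "renyi_divergence \<alpha> (distr (density (PW' \<Otimes>\<^sub>M \<nu>) (\<lambda>z. ennreal (\<rho> z))) Nout G') (distr (PW' \<Otimes>\<^sub>M \<nu>) Nout G')
     \<le> ereal (ln B / (\<alpha> - 1))"
  proof (rule renyi_dpi[OF \<alpha> _ G'm \<rho>m \<rho>_nn _ MB])
    show "prob_space (PW' \<Otimes>\<^sub>M \<nu>)" by (intro prob_space_pair PW(2) \<nu>.prob_space_axioms)
    show "prob_space (distr (density (PW' \<Otimes>\<^sub>M \<nu>) (\<lambda>z. ennreal (\<rho> z))) Nout G')"
      unfolding EQ[symmetric] by (intro prob_space.prob_space_distr Gm prob_space_pair PW(1) \<nu>.prob_space_axioms)
  qed
  have "ln B / (\<alpha> - 1) = ln (enn2real IW) / (\<alpha> - 1) + 4 * real D * real L * \<alpha> / (2 * s\<^sup>2)"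
    using IW_pos \<alpha> s unfolding B_def by (simp add: ln_mult field_simps)
  also have "\<dots> \<le> \<gamma>\<^sub>1 + 4 * real D * real L * \<alpha> / (2 * s\<^sup>2)" using IW_le by simp
  finally have fin: "ln B / (\<alpha> - 1) \<le> \<gamma>\<^sub>1 + 4 * real D * real L * \<alpha> / (2 * s\<^sup>2)" .
  show ?thesis unfolding lhs rhs EQ using main fin by (meson ereal_less_eq(3) order_trans)
qed

end
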